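(* Consider the closed-loop system described in the context. Assume the plant satisfies Assumptions A2 and A3, and at least one of the following holds: $g$ is bounded, or $\tau_p=0$. Let $T>0$ and let $X_T\subset X_\delta=\mathbb{R}^n\times U_\delta$ be a compact set such that for every $(x_0,u_0)\in X_T$, the solution $x$ of $\dot x=f(x,u_0)$ (constant input $u_0$) with $x(0)=x_0$ satisfies $\|x(T)-\Xi(u_0)\|\le\varepsilon_0$. Then there exists $\kappa_T>0$ such that for any gain $k\in(0,\kappa_T)$ and any $r\in Y$, if the initial state $(x_0,u_0)$ of the closed-loop system is in $X_T$, then its state trajectory $(x,u_I)$ satisfies $$x(t)\to\Xi(u_r),\qquad u(t)\to u_r,\qquad y(t)\to r\qquad(t\to\infty),$$ and this convergence is at an exponential rate.
   Context: Plant: $\dot x=f(x,u)$, $y=g(x)$, $f\in C^2(\mathbb{R}^n\times\mathbb{R};\mathbb{R}^n)$, $g:\mathbb{R}^n\to\mathbb{R}$ locally Lipschitz. Fix $u_{min}<u_{max}$, $U=[u_{min},u_{max}]$, $U_\delta=[u_{min}-\delta,u_{max}+\delta]$. For $w\in\mathbb{R}$, $w^+=\max\{w,0\}$, $w^-=\min\{w,0\}$. Saturating integrator: $\dot u_I=\mathscr{S}(u_I,w)$, $\mathscr{S}(u_I,w)=w^+$ if $u_I\le u_{min}$, $w$ if $u_I\in(u_{min},u_{max})$, $w^-$ if $u_I\ge u_{max}$ (trajectories for $L^1$ inputs defined by continuous extension from polynomial inputs). For gains $k>0$, $\tau_p\ge0$ and constant reference $r$, the closed-loop system is $\dot x=f(x,u_I+\tau_pk(r-g(x)))$,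 $\dot u_I=\mathscr{S}(u_I,k(r-g(x)))$, with plant input $u=u_I+\tau_pk(r-g(x))$ and output $y=g(x)$. Assumption A1: there exist $\delta>0$, $\Xi\in C^1(U_\delta;\mathbb{R}^n)$ with $f(\Xi(u),u)=0$ on $U_\delta$, and $\varepsilon_0>0,\lambda>0,m\ge1$ such that for each constant $u_0\in U_\delta$, solutions of $\dot x=f(x,u_0)$ with $\|x(0)-\Xi(u_0)\|\le\varepsilon_0$ satisfy $\|x(t)-\Xi(u_0)\|\le me^{-\lambda t}\|x(0)-\Xi(u_0)\|$, $t\ge0$. Assumption A2: A1 holds and $G(u):=g(\Xi(u))$ satisfies $G(b)-G(a)\ge\mu(b-a)$ for all $a<b$ in $U_\delta$, some $\mu>0$. $Y=[G(u_{min}),G(u_{max})]$; $u_r=G^{-1}(r)$ for $r\in Y$. Assumption A3: A1 holds and there is $\gamma\in\mathcal{K}_\infty$ (continuous, increasing, unbounded, $\gamma(0)=0$) such that for every $x_0\in\mathbb{R}^n$, $u_0\in U_\delta$, $u\in C([0,\infty);\mathbb{R})$, the solution of $\dot x=f(x,u)$, $x(0)=x_0$ satisfies $\limsup_{t\to\infty}\|x(t)-\Xi(u_0)\|\le\gamma(\limsup_{t\to\infty}|u(t)-u_0|)$. *)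

theory Defs
  imports "HOL-Analysis.Analysis"
begin

definition C1_map :: "('a::real_normed_vector \<Rightarrow> 'b::real_normed_vector) \<Rightarrow> bool" where
  "C1_map F \<longleftrightarrow> (\<exists>F'. (\<forall>z. (F has_derivative blinfun_apply (F' z)) (at z)) \<and> continuous_on UNIV F')"

definition C2_map :: "('a::real_normed_vector \<Rightarrow> 'b::real_normed_vector) \<Rightarrow> bool" where
  "C2_map F \<longleftrightarrow> (\<exists>F'. (\<forall>z. (F has_derivative blinfun_apply (F' z)) (at z)) \<and> C1_map F')"

definition C1_on :: "real set \<Rightarrow> (real \<Rightarrow> 'b::real_normed_vector) \<Rightarrow> bool" where
  "C1_on S h \<longleftrightarrow> (\<exists>D. (\<forall>u\<in>S. (h has_vector_derivative D u) (at u within S)) \<and> continuous_on S D)"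

definition loc_lipschitz :: "('a::metric_space \<Rightarrow> 'b::metric_space) \<Rightarrow> bool" where
  "loc_lipschitz h \<longleftrightarrow> (\<forall>x. \<exists>r>0. \<exists>L. L-lipschitz_on (cball x r) h)"

definition Kinf :: "(real \<Rightarrow> real) \<Rightarrow> bool" where
  "Kinf \<gamma> \<longleftrightarrow> continuous_on {0..} \<gamma> \<and> strict_mono_on {0..} \<gamma> \<and> \<gamma> 0 = 0 \<and>
      filterlim \<gamma> at_top at_top"

definition ext_gamma :: "(real \<Rightarrow> real) \<Rightarrow> ereal \<Rightarrow> ereal" where
  "ext_gamma \<gamma> s = (if s = \<infinity> then \<infinity> else if s = -\<infinity> then -\<infinity> else ereal (\<gamma> (real_of_ereal s)))"

definition plant_sol :: "('a::real_normed_vector \<Rightarrow> real \<Rightarrow> 'a) \<Rightarrow> (real \<Rightarrow> real) \<Rightarrow> real set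
    \<Rightarrow> (real \<Rightarrow> 'a) \<Rightarrow> bool" where
  "plant_sol f u I x \<longleftrightarrow> (\<forall>t\<in>I. (x has_vector_derivative f (x t) (u t)) (at t within I))"

definition Udelta :: "real \<Rightarrow> real \<Rightarrow> real \<Rightarrow> real set" where
  "Udelta umin umax \<delta> = {umin - \<delta> .. umax + \<delta>}"

definition A1 :: "('a::euclidean_space \<Rightarrow> real \<Rightarrow> 'a) \<Rightarrow> (real \<Rightarrow> 'a) \<Rightarrow> real \<Rightarrow> real \<Rightarrow> real
    \<Rightarrow> real \<Rightarrow> real \<Rightarrow> real \<Rightarrow> bool" where
  "A1 f \<Xi> umin umax \<delta> \<epsilon>0 lam m \<longleftrightarrow>
     \<delta> > 0 \<and> C1_on (Udelta umin umax \<delta>) \<Xi> \<and>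
     (\<forall>u\<in>Udelta umin umax \<delta>. f (\<Xi> u) u = 0) \<and>
     \<epsilon>0 > 0 \<and> lam > 0 \<and> m \<ge> 1 \<and>
     (\<forall>u0\<in>Udelta umin umax \<delta>. \<forall>x T. T \<ge> 0 \<and> plant_sol f (\<lambda>_. u0) {0..T} x \<and>
        norm (x 0 - \<Xi> u0) \<le> \<epsilon>0 \<longrightarrow>
        (\<forall>t\<in>{0..T}. norm (x t - \<Xi> u0) \<le> m * exp (- lam * t) * norm (x 0 - \<Xi> u0)))"

definition A2 :: "('a::euclidean_space \<Rightarrow> real \<Rightarrow> 'a) \<Rightarrow> ('a \<Rightarrow> real) \<Rightarrow> (real \<Rightarrow> 'a) \<Rightarrow> real \<Rightarrow> real
    \<Rightarrow> real \<Rightarrow> real \<Rightarrow> real \<Rightarrow> real \<Rightarrow> real \<Rightarrow> bool" where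
  "A2 f g \<Xi> umin umax \<delta> \<epsilon>0 lam m \<mu> \<longleftrightarrow>
     A1 f \<Xi> umin umax \<delta> \<epsilon>0 lam m \<and> \<mu> > 0 \<and>
     (\<forall>a\<in>Udelta umin umax \<delta>. \<forall>b\<in>Udelta umin umax \<delta>. a < b \<longrightarrow>
        g (\<Xi> b) - g (\<Xi> a) \<ge> \<mu> * (b - a))"

definition A3 :: "('a::euclidean_space \<Rightarrow> real \<Rightarrow> 'a) \<Rightarrow> (real \<Rightarrow> 'a) \<Rightarrow> real \<Rightarrow> real
    \<Rightarrow> real \<Rightarrow> (real \<Rightarrow> real) \<Rightarrow> bool" where
  "A3 f \<Xi> umin umax \<delta> \<gamma> \<longleftrightarrow> Kinf \<gamma> \<and>
     (\<forall>x0 u0 u. u0 \<in> Udelta umin umax \<delta> \<and> continuous_on {0..} u \<longrightarrow>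
        (\<exists>x. x 0 = x0 \<and> plant_sol f u {0..} x) \<and>
        (\<forall>x. x 0 = x0 \<and> plant_sol f u {0..} x \<longrightarrow>
           Limsup at_top (\<lambda>t. ereal (norm (x t - \<Xi> u0)))
             \<le> ext_gamma \<gamma> (Limsup at_top (\<lambda>t. ereal \<bar>u t - u0\<bar>))))"

definition sat :: "real \<Rightarrow> real \<Rightarrow> real \<Rightarrow> real \<Rightarrow> real" where
  "sat umin umax uI w = (if uI \<le> umin then max w 0 else if uI < umax then w else min w 0)"

text \<open>Closed-loop trajectory (x, uI) on [0,\<infinity>): x is a classical solution, and uI is a
Caratheodory (integral) solution of the saturating integrator driven by w = k (r - g x).\<close>
definition closed_loop_sol :: "('a::real_normed_vector \<Rightarrow> real \<Rightarrow> 'a) \<Rightarrow> ('a \<Rightarrow> real) \<Rightarrow> real \<Rightarrow> real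
    \<Rightarrow> real \<Rightarrow> real \<Rightarrow> real \<Rightarrow> (real \<Rightarrow> 'a) \<Rightarrow> (real \<Rightarrow> real) \<Rightarrow> bool" where
  "closed_loop_sol f g umin umax k \<tau>p r x uI \<longleftrightarrow>
     plant_sol f (\<lambda>t. uI t + \<tau>p * k * (r - g (x t))) {0..} x \<and>
     (\<forall>t\<ge>0. ((\<lambda>s. sat umin umax (uI s) (k * (r - g (x s)))) has_integral (uI t - uI 0)) {0..t})"

text \<open>u_r = G^{-1}(r) for r in Y, where G = g o Xi.\<close>
definition u_ref :: "('a \<Rightarrow> real) \<Rightarrow> (real \<Rightarrow> 'a) \<Rightarrow> real \<Rightarrow> real \<Rightarrow> real \<Rightarrow> real" where
  "u_ref g \<Xi> umin umax r = (THE u. u \<in> {umin..umax} \<and> g (\<Xi> u) = r)"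

end

theory Submission
  imports Defs
begin
lemma crossing:
  fixes h :: "real \<Rightarrow> real"
  assumes cont: "continuous_on {0..S} h" and h0: "h 0 > 0"
    and no: "\<And>\<tau>. 0 < \<tau> \<Longrightarrow> \<tau> \<le> S \<Longrightarrow> (\<forall>s\<in>{0..<\<tau>}. h s > 0) \<Longrightarrow> h \<tau> = 0 \<Longrightarrow> False"
  shows "\<forall>t\<in>{0..S}. h t > 0"
proof (rule ccontr)
  assume "\<not> ?thesis"
  then obtain t1 where t1: "t1 \<in> {0..S}" "h t1 \<le> 0" by force
  define Z where "Z = {t \<in> {0..t1}. h t \<le> (\<lambda>_. 0) t}"
  have contZ: "continuous_on {0..t1} h" using cont t1 by (auto intro: continuous_on_subset)
  have "closed Z" unfolding Z_def
    by (rule continuous_on_closed_Collect_le[OF contZ continuous_on_const closed_atLeastAtMost])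
  moreover have "t1 \<in> Z" using t1 by (auto simp: Z_def)
  moreover have "bdd_below Z" by (auto simp: Z_def bdd_below_def)
  ultimately have tZ: "Inf Z \<in> Z" using closed_contains_Inf by blast
  define \<tau> where "\<tau> = Inf Z"
  have le: "\<And>s. s \<in> Z \<Longrightarrow> \<tau> \<le> s" unfolding \<tau>_def using \<open>bdd_below Z\<close> by (simp add: cInf_lower)
  have tau: "0 \<le> \<tau>" "\<tau> \<le> t1" "h \<tau> \<le> 0" using tZ by (auto simp: Z_def \<tau>_def)
  have pos: "\<forall>s\<in>{0..<\<tau>}. h s > 0"
  proof
    fix s assume s: "s \<in> {0..<\<tau>}"
    show "h s > 0"
    proof (rule ccontr)
      assume "\<not> h s > 0"
      then have "s \<in> Z" using s tau by (auto simp: Z_def)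
      then show False using le s by force
    qed
  qed
  have "\<tau> \<noteq> 0" using tau h0 by auto
  then have tp: "0 < \<tau>" using tau by auto
  have "continuous_on {0..\<tau>} h" using contZ tau by (auto intro: continuous_on_subset)
  then obtain s where s: "0 \<le> s" "s \<le> \<tau>" "h s = 0"
    using IVT2'[of h \<tau> 0 0] tau h0 by force
  have "s = \<tau>" using pos s by (cases "s < \<tau>") (force, auto)
  then show False using no[OF tp _ pos] s tau t1 by auto
qed

lemma vd_within_eps:
  assumes "(f has_vector_derivative D) (at x within s)" "0 < e"
  shows "\<exists>d>0. \<forall>y\<in>s. norm (y - x) < d \<longrightarrow> norm (f y - f x - (y - x) *\<^sub>R D) \<le> e * norm (y - x)"
  using assms unfolding has_vector_derivative_def has_derivative_within_alt by blast

lemma compare: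
  fixes y \<xi> :: "real \<Rightarrow> 'a::real_normed_vector" and F :: "'a \<Rightarrow> real \<Rightarrow> 'a" and u v :: "real \<Rightarrow> real"
  assumes S: "0 \<le> S" and L: "0 < L" and eta: "0 \<le> \<eta>" and d: "0 \<le> d"
   and Lip: "\<And>p q w1 w2. norm p \<le> R \<Longrightarrow> norm q \<le> R \<Longrightarrow> w1 \<in> W \<Longrightarrow> w2 \<in> W \<Longrightarrow>
        norm (F p w1 - F q w2) \<le> L * (norm (p - q) + \<bar>w1 - w2\<bar>)"
   and ysol: "\<forall>t\<in>{0..S}. (y has_vector_derivative F (y t) (u t)) (at t within {0..S})"
   and xsol: "\<forall>t\<in>{0..S}. (\<xi> has_vector_derivative F (\<xi> t) (v t)) (at t within {0..S})"
   and xb: "\<forall>t\<in>{0..S}. norm (\<xi> t) \<le> R - 1 \<and> v t \<in> W"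
   and ub: "\<forall>t\<in>{0..S}. (\<forall>s\<in>{0..t}. norm (y s) \<le> R) \<longrightarrow> \<bar>u t - v t\<bar> \<le> \<eta> \<and> u t \<in> W"
   and y0: "norm (y 0 - \<xi> 0) \<le> d"
   and small: "(d + L*\<eta>*S) * exp (L*S) < 1"
  shows "\<forall>t\<in>{0..S}. norm (y t - \<xi> t) \<le> (d + L*\<eta>*t) * exp (L*t) \<and> norm (y t) \<le> R"
proof -
  define B0 where "B0 t = (d + L*\<eta>*t) * exp (L*t)" for t
  define K where "K = (1+S)*exp(L*S)"
  have Kp: "K > 0" using S unfolding K_def by (simp add: add_pos_nonneg)
  define \<epsilon>1 where "\<epsilon>1 = (1 - B0 S)/(2*K)"
  have e1p: "\<epsilon>1 > 0" using small Kp unfolding \<epsilon>1_def B0_def by simp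
  have B0mono: "B0 t \<le> B0 S" if "t \<in> {0..S}" for t
    unfolding B0_def using that L eta d
    by (intro mult_mono) (auto simp: mult_left_mono)
  have contd: "continuous_on {0..S} (\<lambda>t. y t - \<xi> t)"
    using ysol xsol unfolding continuous_on_eq_continuous_within
    by (auto intro!: continuous_intros dest: has_vector_derivative_continuous)
  have main: "\<forall>t\<in>{0..S}. norm (y t - \<xi> t) < (d + \<epsilon> + (L*\<eta>+\<epsilon>)*t) * exp (L*t)"
    if ep: "0 < \<epsilon>" "\<epsilon> \<le> \<epsilon>1" for \<epsilon>
  proof -
    define Be where "Be t = (d + \<epsilon> + (L*\<eta>+\<epsilon>)*t) * exp (L*t)" for t
    have Be_eq: "Be t = B0 t + \<epsilon> * ((1+t)*exp(L*t))" for t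
      unfolding Be_def B0_def by (simp add: algebra_simps)
    have Be_lt1: "Be t < 1" if "t \<in> {0..S}" for t
    proof -
      have "(1+t)*exp(L*t) \<le> K" unfolding K_def using that L by (intro mult_mono) auto
      then have "\<epsilon> * ((1+t)*exp(L*t)) \<le> \<epsilon>1 * K" using ep that by (intro mult_mono) auto
      also have "\<epsilon>1 * K = (1 - B0 S)/2" unfolding \<epsilon>1_def using Kp by simp
      finally show ?thesis using Be_eq[of t] B0mono[OF that] small unfolding B0_def by simp
    qed
    have "\<forall>t\<in>{0..S}. Be t - norm (y t - \<xi> t) > 0"
    proof (rule crossing)
      show "continuous_on {0..S} (\<lambda>t. Be t - norm (y t - \<xi> t))"
        unfolding Be_def by (intro continuous_intros contd)
      show "Be 0 - norm (y 0 - \<xi> 0) > 0" using y0 ep unfolding Be_def by simp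
    next
      fix \<tau> assume tp: "0 < \<tau>" "\<tau> \<le> S" and pos: "\<forall>s\<in>{0..<\<tau>}. Be s - norm (y s - \<xi> s) > 0"
        and ht: "Be \<tau> - norm (y \<tau> - \<xi> \<tau>) = 0"
      have tS: "\<tau> \<in> {0..S}" using tp by auto
      have inball: "\<forall>s\<in>{0..\<tau>}. norm (y s) \<le> R"
      proof
        fix s assume s: "s \<in> {0..\<tau>}"
        then have sS: "s \<in> {0..S}" using tp by auto
        have "norm (y s - \<xi> s) \<le> Be s"
          using pos ht s by (cases "s < \<tau>") force+
        then have "norm (y s - \<xi> s) \<le> 1" using Be_lt1[OF sS] by simp
        moreover have "norm (y s) \<le> norm (\<xi> s) + norm (y s - \<xi> s)"
          by (metis add.commute diff_add_cancel norm_triangle_ineq)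
        ultimately show "norm (y s) \<le> R" using xb sS by force
      qed
      have uv: "\<bar>u \<tau> - v \<tau>\<bar> \<le> \<eta>" "u \<tau> \<in> W" using ub tS inball by auto
      define D where "D = F (y \<tau>) (u \<tau>) - F (\<xi> \<tau>) (v \<tau>)"
      have "norm D \<le> L * (norm (y \<tau> - \<xi> \<tau>) + \<bar>u \<tau> - v \<tau>\<bar>)"
      proof -
        have "norm (y \<tau>) \<le> R" using inball tp by auto
        moreover have "norm (\<xi> \<tau>) \<le> R - 1" "v \<tau> \<in> W" using xb tS by auto
        moreover have "norm (\<xi> \<tau>) \<le> R" using calculation(2) by simp
        ultimately show ?thesis unfolding D_def using Lip uv(2) by blast
      qed
      also have "\<dots> \<le> L * (Be \<tau> + \<eta>)" using uv ht L by (intro mult_left_mono) auto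
      finally have nD: "norm D \<le> L * Be \<tau> + L * \<eta>" by (simp add: algebra_simps)
      have dD: "((\<lambda>t. y t - \<xi> t) has_vector_derivative D) (at \<tau> within {0..S})"
        unfolding D_def using ysol xsol tS by (intro has_vector_derivative_diff) auto
      define B' where "B' = (L*\<eta>+\<epsilon>)*exp(L*\<tau>) + (d+\<epsilon>+(L*\<eta>+\<epsilon>)*\<tau>)*(exp(L*\<tau>)*L)"
      have "(Be has_real_derivative B') (at \<tau>)"
        unfolding Be_def B'_def by (auto intro!: derivative_eq_intros)
      then have dB: "(Be has_vector_derivative B') (at \<tau> within {0..S})"
        by (simp add: has_real_derivative_iff_has_vector_derivative has_vector_derivative_at_within)
      have "(L*\<eta>+\<epsilon>) * 1 \<le> (L*\<eta>+\<epsilon>)*exp(L*\<tau>)"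
        using L tp eta ep by (intro mult_left_mono) auto
      then have B'ge: "B' \<ge> L * Be \<tau> + L*\<eta> + \<epsilon>"
        unfolding B'_def Be_def by (simp add: algebra_simps)
      define c where "c = \<epsilon>/4"
      have cp: "c > 0" using ep by (simp add: c_def)
      obtain d1 where d1: "d1 > 0" "\<forall>s\<in>{0..S}. norm (s - \<tau>) < d1 \<longrightarrow>
          norm ((y s - \<xi> s) - (y \<tau> - \<xi> \<tau>) - (s - \<tau>) *\<^sub>R D) \<le> c * norm (s - \<tau>)"
        using vd_within_eps[OF dD cp] by blast
      obtain d2 where d2: "d2 > 0" "\<forall>s\<in>{0..S}. norm (s - \<tau>) < d2 \<longrightarrow>
          norm (Be s - Be \<tau> - (s - \<tau>) *\<^sub>R B') \<le> c * norm (s - \<tau>)"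
        using vd_within_eps[OF dB cp] by blast
      define hh where "hh = min (min d1 d2) \<tau> / 2"
      define s where "s = \<tau> - hh"
      have hh: "0 < hh" "hh < d1" "hh < d2" "hh \<le> \<tau>" using d1 d2 tp by (auto simp: hh_def)
      have sS: "s \<in> {0..S}" "s \<in> {0..<\<tau>}" using hh tp by (auto simp: s_def)
      have ns: "norm (s - \<tau>) = hh" using hh by (simp add: s_def)
      have i1: "norm ((y s - \<xi> s) - (y \<tau> - \<xi> \<tau>) - (s - \<tau>) *\<^sub>R D) \<le> c * hh"
      proof -
        have "norm (s - \<tau>) < d1" using ns hh by simp
        then have "norm ((y s - \<xi> s) - (y \<tau> - \<xi> \<tau>) - (s - \<tau>) *\<^sub>R D) \<le> c * norm (s - \<tau>)"
          using d1(2) sS(1) by blast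
        then show ?thesis using ns by simp
      qed
      have i2: "\<bar>Be s - Be \<tau> - (s - \<tau>) * B'\<bar> \<le> c * hh"
      proof -
        have "norm (s - \<tau>) < d2" using ns hh by simp
        then have "norm (Be s - Be \<tau> - (s - \<tau>) *\<^sub>R B') \<le> c * norm (s - \<tau>)"
          using d2(2) sS(1) by blast
        then show ?thesis using ns by simp
      qed
      have "norm ((y s - \<xi> s) - (y \<tau> - \<xi> \<tau>)) \<le>
          norm ((y s - \<xi> s) - (y \<tau> - \<xi> \<tau>) - (s - \<tau>) *\<^sub>R D) + norm ((s - \<tau>) *\<^sub>R D)"
        by (metis diff_add_cancel norm_triangle_ineq)
      also have "norm ((s - \<tau>) *\<^sub>R D) = hh * norm D" using ns by simp
      finally have i3: "norm ((y s - \<xi> s) - (y \<tau> - \<xi> \<tau>)) \<le> c * hh + hh * norm D" using i1 by simp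
      have i4: "norm (y \<tau> - \<xi> \<tau>) - norm (y s - \<xi> s) \<le> norm ((y s - \<xi> s) - (y \<tau> - \<xi> \<tau>))"
        by (metis norm_minus_commute norm_triangle_ineq2)
      have i5: "norm (y s - \<xi> s) < Be s" using pos sS by auto
      have i6: "hh * (norm D + \<epsilon>) \<le> hh * B'" using B'ge nD hh by (intro mult_left_mono) auto
      have "(s - \<tau>) * B' = - (hh * B')" by (simp add: s_def)
      then have i2': "Be \<tau> - Be s \<ge> hh * B' - c * hh" using i2 by (simp add: abs_le_iff)
      have i6': "hh * norm D + hh * \<epsilon> \<le> hh * B'" using i6 by (simp add: distrib_left)
      have i7: "c * hh = (hh * \<epsilon>) / 4" unfolding c_def by simp
      have i8: "hh * \<epsilon> > 0" using hh ep by simp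
      have "norm (y \<tau> - \<xi> \<tau>) = Be \<tau>" using ht by simp
      then show False using i2' i3 i4 i5 i6' i7 i8 by linarith
    qed
    then show ?thesis unfolding Be_def by auto
  qed
  show ?thesis
  proof
    fix t assume t: "t \<in> {0..S}"
    have le: "norm (y t - \<xi> t) \<le> B0 t"
    proof (rule field_le_epsilon)
      fix e :: real assume e: "0 < e"
      define \<epsilon> where "\<epsilon> = min \<epsilon>1 (e / K)"
      have ep: "0 < \<epsilon>" "\<epsilon> \<le> \<epsilon>1" using e e1p Kp by (auto simp: \<epsilon>_def)
      have "norm (y t - \<xi> t) < (d + \<epsilon> + (L*\<eta>+\<epsilon>)*t) * exp (L*t)" using main[OF ep] t by auto
      also have "\<dots> = B0 t + \<epsilon> * ((1+t)*exp(L*t))" unfolding B0_def by (simp add: algebra_simps)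
      also have "\<epsilon> * ((1+t)*exp(L*t)) \<le> (e/K) * K"
        using t L ep e Kp unfolding K_def \<epsilon>_def by (intro mult_mono) (auto intro: mult_mono)
      also have "(e/K) * K = e" using Kp by simp
      finally show "norm (y t - \<xi> t) \<le> B0 t + e" by simp
    qed
    then have "norm (y t - \<xi> t) \<le> 1" using B0mono[OF t] small unfolding B0_def by simp
    moreover have "norm (y t) \<le> norm (\<xi> t) + norm (y t - \<xi> t)"
      by (metis add.commute diff_add_cancel norm_triangle_ineq)
    ultimately show "norm (y t - \<xi> t) \<le> (d + L*\<eta>*t) * exp (L*t) \<and> norm (y t) \<le> R"
      using xb t le unfolding B0_def by force
  qed
qed

lemma plant_sol_subset: "plant_sol f u I x \<Longrightarrow> J \<subseteq> I \<Longrightarrow> plant_sol f u J x"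
  unfolding plant_sol_def by (meson has_vector_derivative_within_subset subsetD)

lemma plant_sol_shift:
  assumes "plant_sol f u {0..} x" "0 \<le> t0"
  shows "plant_sol f (\<lambda>s. u (t0+s)) {0..} (\<lambda>s. x (t0+s))"
  unfolding plant_sol_def
proof
  fix s :: real assume s: "s \<in> {0..}"
  have d1: "((\<lambda>s. t0 + s) has_vector_derivative 1) (at s within {0..})"
    by (auto intro!: derivative_eq_intros)
  have "(x has_vector_derivative f (x (t0+s)) (u (t0+s))) (at (t0+s) within {0..})"
    using assms s unfolding plant_sol_def by auto
  then have d2: "(x has_vector_derivative f (x (t0+s)) (u (t0+s))) (at (t0+s) within (\<lambda>s. t0 + s) ` {0..})"
    by (rule has_vector_derivative_within_subset) (use assms in auto)
  have "((x \<circ> (\<lambda>s. t0 + s)) has_vector_derivative (1 *\<^sub>R f (x (t0+s)) (u (t0+s)))) (at s within {0..})"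
    by (rule vector_diff_chain_within[OF d1 d2])
  then show "((\<lambda>s. x (t0+s)) has_vector_derivative f (x (t0+s)) (u (t0+s))) (at s within {0..})"
    by (simp add: o_def)
qed

lemma plant_sol_cont:
  assumes "plant_sol f u I x" shows "continuous_on I x"
  using assms unfolding plant_sol_def continuous_on_eq_continuous_within
  by (auto dest: has_vector_derivative_continuous)

lemma sat_abs: "\<bar>sat umin umax v w\<bar> \<le> \<bar>w\<bar>"
  unfolding sat_def by auto

lemma sat_nonpos: "umin < umax \<Longrightarrow> umax \<le> v \<Longrightarrow> sat umin umax v w \<le> 0"
  unfolding sat_def by auto

lemma sat_nonneg: "umin < umax \<Longrightarrow> v \<le> umin \<Longrightarrow> sat umin umax v w \<ge> 0"
  unfolding sat_def by auto

lemma sat_le: "umin < umax \<Longrightarrow> (v \<le> umin \<Longrightarrow> 0 \<le> c) \<Longrightarrow> w \<le> c \<Longrightarrow> sat umin umax v w \<le> c"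
  unfolding sat_def by auto

lemma sat_ge: "umin < umax \<Longrightarrow> (umax \<le> v \<Longrightarrow> c \<le> 0) \<Longrightarrow> c \<le> w \<Longrightarrow> c \<le> sat umin umax v w"
  unfolding sat_def by auto

locale integ =
  fixes \<sigma> :: "real \<Rightarrow> real" and uI :: "real \<Rightarrow> real"
  assumes hI: "\<forall>t\<ge>0. (\<sigma> has_integral (uI t - uI 0)) {0..t}"
begin

lemma incr:
  assumes "0 \<le> s" "s \<le> t"
  shows "(\<sigma> has_integral (uI t - uI s)) {s..t}"
proof -
  have it: "(\<sigma> has_integral (uI t - uI 0)) {0..t}" using hI assms by auto
  have hs: "(\<sigma> has_integral (uI s - uI 0)) {0..s}" using hI assms by auto
  have int: "\<sigma> integrable_on {0..t}" using it by blast
  have "integral {0..s} \<sigma> + integral {s..t} \<sigma> = integral {0..t} \<sigma>"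
    by (rule Henstock_Kurzweil_Integration.integral_combine[OF assms int])
  then have "integral {s..t} \<sigma> = uI t - uI s"
    using integral_unique[OF it] integral_unique[OF hs] by simp
  moreover have "\<sigma> integrable_on {s..t}"
    by (rule integrable_subinterval_real[OF int]) (use assms in auto)
  ultimately show ?thesis by (metis has_integral_integral)
qed

lemma incr_bound:
  assumes "0 \<le> s" "s \<le> t" "0 \<le> B" "\<And>\<tau>. \<tau> \<in> {s..t} \<Longrightarrow> \<bar>\<sigma> \<tau>\<bar> \<le> B"
  shows "\<bar>uI t - uI s\<bar> \<le> B * (t - s)"
proof -
  have "norm (uI t - uI s) \<le> B * Henstock_Kurzweil_Integration.content (cbox s t)"
    by (rule has_integral_bound[OF assms(3)]) (use incr[OF assms(1,2)] assms(4) in auto)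
  then show ?thesis using assms by simp
qed

lemma cont: "0 \<le> a \<Longrightarrow> continuous_on {a..b} uI"
proof -
  assume a: "0 \<le> a"
  show ?thesis
  proof (cases "a \<le> b")
    case False then show ?thesis by simp
  next
    case True
    have "(\<sigma> has_integral (uI b - uI 0)) {0..b}" using hI a True by auto
    then have int: "\<sigma> integrable_on {0..b}" by blast
    have "continuous_on {0..b} (\<lambda>t. uI 0 + integral {0..t} \<sigma>)"
      by (intro continuous_intros indefinite_integral_continuous_1 int)
    moreover have "\<And>t. t \<in> {0..b} \<Longrightarrow> uI 0 + integral {0..t} \<sigma> = uI t"
    proof -
      fix t :: real assume "t \<in> {0..b}"
      then have "(\<sigma> has_integral (uI t - uI 0)) {0..t}" using hI by auto
      then show "uI 0 + integral {0..t} \<sigma> = uI t" by (simp add: integral_unique)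
    qed
    ultimately have "continuous_on {0..b} uI" by (metis (no_types, lifting) continuous_on_cong)
    then show ?thesis by (rule continuous_on_subset) (use a in auto)
  qed
qed

lemma upper_inv:
  assumes M: "\<And>\<tau>. 0 \<le> \<tau> \<Longrightarrow> uI \<tau> \<ge> M \<Longrightarrow> \<sigma> \<tau> \<le> 0" and M0: "uI 0 \<le> M" and t1: "0 \<le> t1"
  shows "uI t1 \<le> M"
proof (rule ccontr)
  assume "\<not> uI t1 \<le> M"
  then have big: "uI t1 > M" by simp
  define Z where "Z = {s \<in> {0..t1}. uI s \<le> (\<lambda>_. M) s}"
  have "closed Z" unfolding Z_def
    by (rule continuous_on_closed_Collect_le[OF cont continuous_on_const closed_atLeastAtMost]) simp
  moreover have "0 \<in> Z" using M0 t1 by (auto simp: Z_def)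
  moreover have "bdd_above Z" by (auto simp: Z_def bdd_above_def)
  ultimately have tZ: "Sup Z \<in> Z" using closed_contains_Sup by blast
  define ts where "ts = Sup Z"
  have ge: "\<And>s. s \<in> Z \<Longrightarrow> s \<le> ts" unfolding ts_def using \<open>bdd_above Z\<close> by (simp add: cSup_upper)
  have ts: "0 \<le> ts" "ts \<le> t1" "uI ts \<le> M" using tZ by (auto simp: Z_def ts_def)
  have "continuous_on {ts..t1} uI" using ts by (intro cont)
  then obtain s where s: "ts \<le> s" "s \<le> t1" "uI s = M"
    using IVT'[of uI ts M t1] ts big by force
  then have "s \<in> Z" using ts by (auto simp: Z_def)
  then have "s = ts" using ge s by force
  have above: "uI \<tau> \<ge> M" if "\<tau> \<in> {ts..t1}" for \<tau>
  proof (cases "\<tau> = ts")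
    case True then show ?thesis using s \<open>s = ts\<close> by simp
  next
    case False
    then have "\<tau> > ts" using that by simp
    then have "\<tau> \<notin> Z" using ge by force
    then show ?thesis using that ts by (auto simp: Z_def)
  qed
  have "uI t1 - uI ts \<le> 0"
    by (rule has_integral_le[OF incr[OF ts(1,2)] has_integral_0]) (use above M ts in auto)
  then show False using s \<open>s = ts\<close> big by simp
qed

lemma lower_inv:
  assumes M: "\<And>\<tau>. 0 \<le> \<tau> \<Longrightarrow> uI \<tau> \<le> M \<Longrightarrow> \<sigma> \<tau> \<ge> 0" and M0: "M \<le> uI 0" and t1: "0 \<le> t1"
  shows "M \<le> uI t1"
proof -
  interpret neg: integ "\<lambda>s. - \<sigma> s" "\<lambda>s. - uI s"
  proof
    show "\<forall>t\<ge>0. ((\<lambda>s. - \<sigma> s) has_integral (- uI t - - uI 0)) {0..t}"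
    proof (intro allI impI)
      fix t :: real assume "0 \<le> t"
      then have "(\<sigma> has_integral (uI t - uI 0)) {0..t}" using hI by auto
      from has_integral_neg[OF this] show "((\<lambda>s. - \<sigma> s) has_integral (- uI t - - uI 0)) {0..t}" by simp
    qed
  qed
  have "- uI t1 \<le> - M"
    by (rule neg.upper_inv) (use M M0 t1 in \<open>auto\<close>)
  then show ?thesis by simp
qed

end

lemma f_lip:
  fixes f :: "'a::euclidean_space \<Rightarrow> real \<Rightarrow> 'a"
  assumes "C2_map (\<lambda>p. f (fst p) (snd p))"
  shows "\<exists>L>0. \<forall>p q w1 w2. norm p \<le> R \<longrightarrow> norm q \<le> R \<longrightarrow> w1 \<in> {\<alpha>..\<beta>} \<longrightarrow> w2 \<in> {\<alpha>..\<beta>} \<longrightarrow>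
      norm (f p w1 - f q w2) \<le> L * (norm (p - q) + \<bar>w1 - w2\<bar>)"
proof -
  obtain F' where F': "\<And>z. ((\<lambda>p. f (fst p) (snd p)) has_derivative blinfun_apply (F' z)) (at z)"
    and c1: "C1_map F'"
    using assms unfolding C2_map_def by blast
  obtain F'' where F'': "\<And>z. (F' has_derivative blinfun_apply (F'' z)) (at z)"
    using c1 unfolding C1_map_def by blast
  have contF': "continuous_on UNIV F'"
    unfolding continuous_on_eq_continuous_within
    using F'' has_derivative_continuous has_derivative_at_withinI by blast
  define K where "K = cball (0::'a) R \<times> {\<alpha>..\<beta>}"
  have "compact K" unfolding K_def by (intro compact_Times) auto
  then have "compact (F' ` K)" by (intro compact_continuous_image continuous_on_subset[OF contF']) auto
  then obtain B where B: "\<And>z. z \<in> K \<Longrightarrow> norm (F' z) \<le> B"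
    using compact_imp_bounded[of "F' ` K"] unfolding bounded_iff by auto
  define L where "L = max B 1"
  have "convex K" unfolding K_def by (intro convex_Times) auto
  have bnd: "norm (f p w1 - f q w2) \<le> L * (norm (p - q) + \<bar>w1 - w2\<bar>)"
    if "norm p \<le> R" "norm q \<le> R" "w1 \<in> {\<alpha>..\<beta>}" "w2 \<in> {\<alpha>..\<beta>}" for p q w1 w2
  proof -
    have inK: "(p, w1) \<in> K" "(q, w2) \<in> K" using that by (auto simp: K_def)
    have "norm ((\<lambda>p. f (fst p) (snd p)) (p, w1) - (\<lambda>p. f (fst p) (snd p)) (q, w2)) \<le> L * norm ((p, w1) - (q, w2))"
    proof (rule differentiable_bound[OF \<open>convex K\<close> _ _ inK])
      show "\<And>x. x \<in> K \<Longrightarrow> ((\<lambda>p. f (fst p) (snd p)) has_derivative blinfun_apply (F' x)) (at x within K)"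
        using F' has_derivative_at_withinI by blast
      show "\<And>x. x \<in> K \<Longrightarrow> onorm (blinfun_apply (F' x)) \<le> L"
        using B unfolding L_def by (metis max.coboundedI1 norm_blinfun.rep_eq)
    qed
    also have "norm ((p, w1) - (q, w2)) \<le> norm (p - q) + \<bar>w1 - w2\<bar>"
      using norm_Pair_le[of "p - q" "w1 - w2"] by simp
    then have "L * norm ((p, w1) - (q, w2)) \<le> L * (norm (p - q) + \<bar>w1 - w2\<bar>)"
      unfolding L_def by (intro mult_left_mono) auto
    finally show ?thesis by simp
  qed
  show ?thesis
    by (rule exI[of _ L]) (use bnd in \<open>auto simp: L_def\<close>)
qed

lemma g_lip:
  fixes g :: "'a::euclidean_space \<Rightarrow> real"
  assumes "loc_lipschitz g"
  shows "\<exists>Lg>0. Lg-lipschitz_on (cball 0 R) g"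
proof -
  have ll: "local_lipschitz {0::real} (cball 0 R) (\<lambda>_. g)"
  proof (rule local_lipschitzI)
    fix t x assume "t \<in> {0::real}" "x \<in> cball (0::'a) R"
    obtain r L where "r > 0" "L-lipschitz_on (cball x r) g"
      using assms unfolding loc_lipschitz_def by blast
    then show "\<exists>u>0. \<exists>L. \<forall>t\<in>cball t u \<inter> {0}. L-lipschitz_on (cball x u \<inter> cball 0 R) g"
      by (intro exI[of _ r] conjI exI[of _ L]) (auto intro: lipschitz_on_subset)
  qed
  obtain L where "\<And>t. t \<in> {0::real} \<Longrightarrow> L-lipschitz_on (cball 0 R) g"
    by (rule local_lipschitz_compact_implies_lipschitz[OF ll]) auto
  then have "L-lipschitz_on (cball 0 R) g" by blast
  then have "(max L 1)-lipschitz_on (cball 0 R) g" by (rule lipschitz_on_mono) auto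
  then show ?thesis by (intro exI[of _ "max L 1"]) auto
qed

lemma Xi_lip:
  fixes \<Xi> :: "real \<Rightarrow> 'a::real_normed_vector"
  assumes "C1_on {a..b} \<Xi>"
  shows "\<exists>LX>0. \<forall>u\<in>{a..b}. \<forall>v\<in>{a..b}. norm (\<Xi> u - \<Xi> v) \<le> LX * \<bar>u - v\<bar>"
proof -
  obtain D where D: "\<And>u. u \<in> {a..b} \<Longrightarrow> (\<Xi> has_vector_derivative D u) (at u within {a..b})"
    and cD: "continuous_on {a..b} D"
    using assms unfolding C1_on_def by blast
  have "compact (D ` {a..b})" by (intro compact_continuous_image cD) auto
  then obtain B where B: "\<And>u. u \<in> {a..b} \<Longrightarrow> norm (D u) \<le> B"
    using compact_imp_bounded[of "D ` {a..b}"] unfolding bounded_iff by (metis imageI)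
  define LX where "LX = max B 1"
  have "norm (\<Xi> u - \<Xi> v) \<le> LX * norm (u - v)" if "u \<in> {a..b}" "v \<in> {a..b}" for u v
  proof (rule differentiable_bound[of "{a..b}" _ "\<lambda>u h. h *\<^sub>R D u"])
    show "convex {a..b}" by simp
    show "\<And>x. x \<in> {a..b} \<Longrightarrow> (\<Xi> has_derivative (\<lambda>h. h *\<^sub>R D x)) (at x within {a..b})"
      using D unfolding has_vector_derivative_def by blast
    show "\<And>x. x \<in> {a..b} \<Longrightarrow> onorm (\<lambda>h. h *\<^sub>R D x) \<le> LX"
    proof -
      fix x assume x: "x \<in> {a..b}"
      have "onorm (\<lambda>h::real. h *\<^sub>R D x) = onorm (\<lambda>h::real. h) * norm (D x)"
        by (rule onorm_scaleR_left) (rule bounded_linear_ident)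
      also have "\<dots> \<le> LX" using B[OF x] by (simp add: onorm_id LX_def)
      finally show "onorm (\<lambda>h. h *\<^sub>R D x) \<le> LX" .
    qed
  qed (use that in auto)
  then show ?thesis by (intro exI[of _ LX]) (auto simp: LX_def)
qed

lemma C1_on_cont: "C1_on S h \<Longrightarrow> continuous_on S h"
  unfolding C1_on_def continuous_on_eq_continuous_within
  by (auto dest: has_vector_derivative_continuous)

locale plant_setting =
  fixes f :: "'a::euclidean_space \<Rightarrow> real \<Rightarrow> 'a" and g :: "'a \<Rightarrow> real"
    and \<Xi> :: "real \<Rightarrow> 'a" and \<gamma> :: "real \<Rightarrow> real"
    and umin umax \<delta> \<epsilon>0 lam m \<mu> \<tau>p T :: real
    and XT :: "('a \<times> real) set" and a b :: real
  assumes umin_umax: "umin < umax"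
    and fC2: "C2_map (\<lambda>p. f (fst p) (snd p))"
    and gll: "loc_lipschitz g"
    and hA2: "A2 f g \<Xi> umin umax \<delta> \<epsilon>0 lam m \<mu>"
    and hA3: "A3 f \<Xi> umin umax \<delta> \<gamma>"
    and taup: "\<tau>p \<ge> 0"
    and Tpos: "T > 0"
    and XTc: "compact XT"
    and XTsub: "XT \<subseteq> UNIV \<times> Udelta umin umax \<delta>"
    and XTprop: "\<forall>(x0, u0)\<in>XT. (\<exists>x. x 0 = x0 \<and> plant_sol f (\<lambda>_. u0) {0..T} x) \<and>
           (\<forall>x. x 0 = x0 \<and> plant_sol f (\<lambda>_. u0) {0..T} x \<longrightarrow> norm (x T - \<Xi> u0) \<le> \<epsilon>0)"
    and a_def: "a = umin - \<delta>" and b_def: "b = umax + \<delta>"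
begin

lemma Ud: "Udelta umin umax \<delta> = {a..b}" unfolding Udelta_def a_def b_def by simp

lemma basic: "\<delta> > 0" "C1_on {a..b} \<Xi>" "\<epsilon>0 > 0" "lam > 0" "m \<ge> 1" "\<mu> > 0"
  using hA2 unfolding A2_def A1_def Ud by auto

lemma ab: "a < umin" "umin < umax" "umax < b" "a < b"
  using basic umin_umax unfolding a_def b_def by auto

lemma A1prop:
  assumes "v \<in> {a..b}" "0 \<le> S'" "plant_sol f (\<lambda>_. v) {0..S'} \<psi>" "norm (\<psi> 0 - \<Xi> v) \<le> \<epsilon>0"
  shows "\<forall>t\<in>{0..S'}. norm (\<psi> t - \<Xi> v) \<le> m * exp (- lam * t) * norm (\<psi> 0 - \<Xi> v)"
  using hA2 assms unfolding A2_def A1_def Ud by blast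

lemma Gmono:
  assumes "u \<in> {a..b}" "v \<in> {a..b}" "u \<le> v"
  shows "g (\<Xi> v) - g (\<Xi> u) \<ge> \<mu> * (v - u)"
proof (cases "u = v")
  case True then show ?thesis by simp
next
  case False
  then show ?thesis using hA2 assms unfolding A2_def Ud by auto
qed

lemma frozen_exists:
  assumes "v \<in> {a..b}"
  shows "\<exists>\<psi>. \<psi> 0 = x0 \<and> plant_sol f (\<lambda>_. v) {0..} \<psi>"
  using hA3 assms unfolding A3_def Ud by (auto intro: continuous_on_const)

lemma XT_sub: "p \<in> XT \<Longrightarrow> snd p \<in> {a..b}"
  using XTsub Ud by auto

lemma frozen_bound: "\<exists>R0\<ge>0. \<forall>p\<in>XT. \<forall>\<phi>. \<phi> 0 = fst p \<and> plant_sol f (\<lambda>_. snd p) {0..T} \<phi> \<longrightarrow>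
    (\<forall>t\<in>{0..T}. norm (\<phi> t) \<le> R0)"
proof -
  have loc: "\<exists>\<rho>>0. \<exists>Rp\<ge>0. \<forall>q\<in>XT. dist p q < \<rho> \<longrightarrow> (\<forall>\<phi>. \<phi> 0 = fst q \<and> plant_sol f (\<lambda>_. snd q) {0..T} \<phi> \<longrightarrow>
      (\<forall>t\<in>{0..T}. norm (\<phi> t) \<le> Rp))" if p: "p \<in> XT" for p
  proof -
    obtain \<phi>p where \<phi>p: "\<phi>p 0 = fst p" "plant_sol f (\<lambda>_. snd p) {0..T} \<phi>p"
      using XTprop p by (cases p) auto
    have "compact (\<phi>p ` {0..T})" by (intro compact_continuous_image plant_sol_cont[OF \<phi>p(2)]) auto
    then obtain B where B: "\<And>t. t \<in> {0..T} \<Longrightarrow> norm (\<phi>p t) \<le> B"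
      using compact_imp_bounded[of "\<phi>p ` {0..T}"] unfolding bounded_iff by (metis imageI)
    define Rp where "Rp = max B 0"
    obtain L where L: "L > 0" "\<forall>p q w1 w2. norm p \<le> Rp + 1 \<longrightarrow> norm q \<le> Rp + 1 \<longrightarrow> w1 \<in> {a..b} \<longrightarrow> w2 \<in> {a..b} \<longrightarrow>
      norm (f p w1 - f q w2) \<le> L * (norm (p - q) + \<bar>w1 - w2\<bar>)"
      using f_lip[OF fC2, of "Rp + 1" a b] by blast
    define \<rho> where "\<rho> = 1 / (2 * ((1 + L * T) * exp (L * T)))"
    have pos: "(1 + L * T) * exp (L * T) > 0" using L Tpos by (simp add: add_pos_nonneg)
    have rp: "\<rho> > 0" unfolding \<rho>_def using pos by simp
    have small: "(\<rho> + L * \<rho> * T) * exp (L * T) < 1"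
    proof -
      have "(\<rho> + L * \<rho> * T) * exp (L * T) = \<rho> * ((1 + L * T) * exp (L * T))" by (simp add: algebra_simps)
      also have "\<dots> = 1/2" unfolding \<rho>_def using pos by (simp add: field_simps)
      finally show ?thesis by simp
    qed
    have "\<forall>q\<in>XT. dist p q < \<rho> \<longrightarrow> (\<forall>\<phi>. \<phi> 0 = fst q \<and> plant_sol f (\<lambda>_. snd q) {0..T} \<phi> \<longrightarrow>
      (\<forall>t\<in>{0..T}. norm (\<phi> t) \<le> Rp + 1))"
    proof (intro ballI impI allI)
      fix q \<phi> t assume q: "q \<in> XT" "dist p q < \<rho>" and \<phi>: "\<phi> 0 = fst q \<and> plant_sol f (\<lambda>_. snd q) {0..T} \<phi>"
        and t: "t \<in> {0..T}"
      have d1: "norm (fst q - fst p) \<le> \<rho>" using dist_fst_le[of q p] q by (simp add: dist_norm norm_minus_commute)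
      have d2: "\<bar>snd q - snd p\<bar> \<le> \<rho>" using dist_snd_le[of q p] q by (simp add: dist_norm norm_minus_commute)
      have "\<forall>t\<in>{0..T}. norm (\<phi> t - \<phi>p t) \<le> (\<rho> + L*\<rho>*t) * exp (L*t) \<and> norm (\<phi> t) \<le> Rp + 1"
      proof (rule compare[where F=f and u="\<lambda>_. snd q" and v="\<lambda>_. snd p" and W="{a..b}"])
        show "0 \<le> T" using Tpos by simp
        show "0 < L" using L by simp
        show "0 \<le> \<rho>" using rp by simp
        show "0 \<le> \<rho>" using rp by simp
        show "\<And>p q w1 w2. norm p \<le> Rp + 1 \<Longrightarrow> norm q \<le> Rp + 1 \<Longrightarrow> w1 \<in> {a..b} \<Longrightarrow> w2 \<in> {a..b} \<Longrightarrow>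
          norm (f p w1 - f q w2) \<le> L * (norm (p - q) + \<bar>w1 - w2\<bar>)" using L by blast
        show "\<forall>t\<in>{0..T}. (\<phi> has_vector_derivative f (\<phi> t) (snd q)) (at t within {0..T})"
          using \<phi> unfolding plant_sol_def by blast
        show "\<forall>t\<in>{0..T}. (\<phi>p has_vector_derivative f (\<phi>p t) (snd p)) (at t within {0..T})"
          using \<phi>p unfolding plant_sol_def by blast
        show "\<forall>t\<in>{0..T}. norm (\<phi>p t) \<le> Rp + 1 - 1 \<and> snd p \<in> {a..b}"
          using B XT_sub[OF p] unfolding Rp_def by force
        show "\<forall>t\<in>{0..T}. (\<forall>s\<in>{0..t}. norm (\<phi> s) \<le> Rp + 1) \<longrightarrow> \<bar>snd q - snd p\<bar> \<le> \<rho> \<and> snd q \<in> {a..b}"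
          using d2 XT_sub[OF q(1)] by blast
        show "norm (\<phi> 0 - \<phi>p 0) \<le> \<rho>" using d1 \<phi> \<phi>p by simp
        show "(\<rho> + L * \<rho> * T) * exp (L * T) < 1" by (rule small)
      qed
      then show "norm (\<phi> t) \<le> Rp + 1" using t by blast
    qed
    then have H: "\<forall>q\<in>XT. dist p q < \<rho> \<longrightarrow> (\<forall>\<phi>. \<phi> 0 = fst q \<and> plant_sol f (\<lambda>_. snd q) {0..T} \<phi> \<longrightarrow>
      (\<forall>t\<in>{0..T}. norm (\<phi> t) \<le> Rp + 1))" by blast
    have "Rp + 1 \<ge> 0" unfolding Rp_def by simp
    with H rp show ?thesis by blast
  qed
  then obtain \<rho> Rf where \<rho>: "\<And>p. p \<in> XT \<Longrightarrow> \<rho> p > 0" and Rf: "\<And>p. p \<in> XT \<Longrightarrow> Rf p \<ge> 0"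
    and cov: "\<And>p q \<phi>. p \<in> XT \<Longrightarrow> q \<in> XT \<Longrightarrow> dist p q < \<rho> p \<Longrightarrow> \<phi> 0 = fst q \<Longrightarrow> plant_sol f (\<lambda>_. snd q) {0..T} \<phi> \<Longrightarrow>
      (\<forall>t\<in>{0..T}. norm (\<phi> t) \<le> Rf p)"
    by metis
  obtain C' where C': "C' \<subseteq> XT" "finite C'" "XT \<subseteq> (\<Union>c\<in>C'. ball c (\<rho> c))"
  proof (rule compactE_image[OF XTc, of XT "\<lambda>c. ball c (\<rho> c)"])
    show "XT \<subseteq> (\<Union>c\<in>XT. ball c (\<rho> c))" using \<rho> by force
  qed auto
  define R0 where "R0 = (\<Sum>c\<in>C'. Rf c)"
  have "R0 \<ge> 0" unfolding R0_def using C' Rf by (intro sum_nonneg) auto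
  moreover have "\<forall>p\<in>XT. \<forall>\<phi>. \<phi> 0 = fst p \<and> plant_sol f (\<lambda>_. snd p) {0..T} \<phi> \<longrightarrow>
    (\<forall>t\<in>{0..T}. norm (\<phi> t) \<le> R0)"
  proof (intro ballI allI impI)
    fix q \<phi> t assume q: "q \<in> XT" and \<phi>: "\<phi> 0 = fst q \<and> plant_sol f (\<lambda>_. snd q) {0..T} \<phi>" and t: "t \<in> {0..T}"
    obtain c where c: "c \<in> C'" "q \<in> ball c (\<rho> c)" using C' q by blast
    have "norm (\<phi> t) \<le> Rf c" using cov[of c q \<phi>] c C' q \<phi> t by auto
    also have "Rf c \<le> R0" unfolding R0_def using c C' Rf by (intro member_le_sum) auto
    finally show "norm (\<phi> t) \<le> R0" .
  qed
  ultimately show ?thesis by blast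
qed

end

locale cnst = plant_setting +
  fixes LX XM S R0 Rs Lf Lg Gb :: real
  assumes LX: "LX > 0" "\<forall>u\<in>{a..b}. \<forall>v\<in>{a..b}. norm (\<Xi> u - \<Xi> v) \<le> LX * \<bar>u - v\<bar>"
   and XM: "XM \<ge> 0" "\<forall>u\<in>{a..b}. norm (\<Xi> u) \<le> XM"
   and S: "S > 0" "m * exp (- lam * S) \<le> 1/4"
   and R0: "R0 \<ge> 0" "\<forall>p\<in>XT. \<forall>\<phi>. \<phi> 0 = fst p \<and> plant_sol f (\<lambda>_. snd p) {0..T} \<phi> \<longrightarrow> (\<forall>t\<in>{0..T}. norm (\<phi> t) \<le> R0)"
   and Rs: "Rs = R0 + XM + m * \<epsilon>0 + 1"
   and Lf: "Lf > 0" "\<forall>p q w1 w2. norm p \<le> Rs \<longrightarrow> norm q \<le> Rs \<longrightarrow> w1 \<in> {a-1..b+1} \<longrightarrow> w2 \<in> {a-1..b+1} \<longrightarrow>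
        norm (f p w1 - f q w2) \<le> Lf * (norm (p - q) + \<bar>w1 - w2\<bar>)"
   and Lg: "Lg > 0" "Lg-lipschitz_on (cball 0 Rs) g"
   and Gb: "Gb \<ge> 0" "\<forall>p\<in>cball 0 Rs. \<bar>g p\<bar> \<le> Gb"
begin

definition "T1 = T + S"
definition "c1 = Lf * (T1 + \<tau>p) * (2 * Gb) * T1 * exp (Lf * T1)"
definition "c3 = Lf * (S + \<tau>p) * S * exp (Lf * S)"
definition "c5 = c3 + LX * S"
definition "cQ = 2 * (Lg * LX + Lg * m)"
definition "c4 = 2 * Lg * LX * S + Lg * c3"
definition "c6 = (\<mu> * S^2 + S * Lg * c5) * cQ"
definition "CC = S * Lg * m + c6 + 3 * S * cQ"
definition "\<beta> = \<mu> * S / (4 * c5 * cQ)"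

lemma cnst_pos: "T1 > 0" "c1 \<ge> 0" "c3 \<ge> 0" "c5 > 0" "cQ > 0" "c4 \<ge> 0" "c6 \<ge> 0" "CC \<ge> 0" "\<beta> > 0"
  "Rs \<ge> 1" "m > 0" "\<epsilon>0 > 0" "\<mu> > 0" "lam > 0"
proof -
  show T1: "T1 > 0" unfolding T1_def using Tpos S by simp
  show c1: "c1 \<ge> 0" unfolding c1_def using T1 Lf Gb taup by simp
  show c3: "c3 \<ge> 0" unfolding c3_def using S Lf taup by simp
  show c5: "c5 > 0" unfolding c5_def using c3 LX S by (simp add: add_nonneg_pos)
  show m: "m > 0" using basic by simp
  show cQ: "cQ > 0" unfolding cQ_def using LX Lg m by (simp add: add_pos_pos)
  show "c4 \<ge> 0" unfolding c4_def using LX Lg S c3 by simp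
  show c6: "c6 \<ge> 0" unfolding c6_def using basic S Lg c5 cQ by simp
  show "CC \<ge> 0" unfolding CC_def using S Lg m c6 cQ by simp
  show "\<beta> > 0" unfolding \<beta>_def using basic S c5 cQ by simp
  show "Rs \<ge> 1" unfolding Rs using R0 XM m basic by simp
  show "\<epsilon>0 > 0" "\<mu> > 0" "lam > 0" using basic by auto
qed

end

locale traj = cnst +
  fixes k r :: real and x :: "real \<Rightarrow> 'a::euclidean_space" and uI :: "real \<Rightarrow> real"
  assumes k0: "0 < k" and k1: "k \<le> 1"
   and k2: "k * (\<tau>p * (2 * Gb)) \<le> 1"
   and k3: "k * c1 < 1"
   and k4: "k * (c1 + LX * T1 * (2 * Gb)) \<le> 3 * \<epsilon>0 / 4"
   and k5: "k * (Lf * (S + \<tau>p) * (2 * Gb) * S * exp (Lf * S)) < 1"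
   and k6: "k * c4 \<le> 1/2"
   and k7: "k * c6 \<le> \<mu> * S / 2"
   and k8: "k * (3 * S * cQ + \<mu> * S / 2) \<le> 1"
   and k9: "k * (c5 * cQ * (b - a + \<epsilon>0)) \<le> 3 * \<epsilon>0 / 4"
   and k10: "k * (CC + \<beta> * c5 * cQ + \<beta> * \<mu> * S / 4) \<le> 3 * \<beta> / 4"
   and rY: "r \<in> {g (\<Xi> umin) .. g (\<Xi> umax)}"
   and init: "(x 0, uI 0) \<in> XT"
   and cl: "closed_loop_sol f g umin umax k \<tau>p r x uI"
begin

definition "ur = u_ref g \<Xi> umin umax r"
definition "uu t = uI t + \<tau>p * k * (r - g (x t))" for t
definition "\<sigma> s = sat umin umax (uI s) (k * (r - g (x s)))" for s

lemma gcont: "continuous_on (cball 0 Rs) g"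
  using Lg(2) by (rule lipschitz_on_continuous_on)

lemma Xi_ball: "u \<in> {a..b} \<Longrightarrow> norm (\<Xi> u) \<le> Rs - 1"
proof -
  assume u: "u \<in> {a..b}"
  have "norm (\<Xi> u) \<le> XM" using XM(2) u by blast
  moreover have "m * \<epsilon>0 \<ge> 0" using cnst_pos by simp
  ultimately show ?thesis using R0(1) unfolding Rs by linarith
qed

lemma ur: "ur \<in> {umin..umax}" "g (\<Xi> ur) = r"
proof -
  have sub: "{umin..umax} \<subseteq> {a..b}" using ab by auto
  have "continuous_on {umin..umax} \<Xi>"
    by (rule continuous_on_subset[OF C1_on_cont[OF basic(2)] sub])
  moreover have "\<Xi> ` {umin..umax} \<subseteq> cball 0 Rs"
  proof
    fix p assume "p \<in> \<Xi> ` {umin..umax}"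
    then obtain u where "u \<in> {umin..umax}" "p = \<Xi> u" by blast
    then have "norm p \<le> Rs - 1" using Xi_ball sub by blast
    then show "p \<in> cball 0 Rs" by simp
  qed
  ultimately have cG: "continuous_on {umin..umax} (\<lambda>u. g (\<Xi> u))"
    using continuous_on_compose2[OF gcont] by blast
  obtain u0 where u0: "u0 \<ge> umin" "u0 \<le> umax" "g (\<Xi> u0) = r"
    using IVT'[of "\<lambda>u. g (\<Xi> u)" umin r umax] rY cG ab by auto
  have uniq: "v = u0" if "v \<in> {umin..umax}" "g (\<Xi> v) = r" for v
  proof (rule ccontr)
    assume "v \<noteq> u0"
    then consider "v < u0" | "u0 < v" by linarith
    then show False
    proof cases
      case 1
      then have "g (\<Xi> u0) - g (\<Xi> v) \<ge> \<mu> * (u0 - v)" using Gmono[of v u0] that u0 sub by auto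
      moreover have "\<mu> * (u0 - v) > 0" using 1 basic by simp
      ultimately show False using that u0 by simp
    next
      case 2
      then have "g (\<Xi> v) - g (\<Xi> u0) \<ge> \<mu> * (v - u0)" using Gmono[of u0 v] that u0 sub by auto
      moreover have "\<mu> * (v - u0) > 0" using 2 basic by simp
      ultimately show False using that u0 by simp
    qed
  qed
  have "ur = u0" unfolding ur_def u_ref_def
  proof (rule the_equality)
    show "u0 \<in> {umin..umax} \<and> g (\<Xi> u0) = r" using u0 by simp
    show "\<And>v. v \<in> {umin..umax} \<and> g (\<Xi> v) = r \<Longrightarrow> v = u0" using uniq by blast
  qed
  then show "ur \<in> {umin..umax}" "g (\<Xi> ur) = r" using u0 by auto
qed

lemma ur_ab: "ur \<in> {a..b}" using ur ab by auto

lemma xsol: "plant_sol f uu {0..} x"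
  using cl unfolding closed_loop_sol_def uu_def by blast

sublocale I: integ \<sigma> uI
proof
  have e: "\<sigma> = (\<lambda>s. sat umin umax (uI s) (k * (r - g (x s))))" by (rule ext) (simp add: \<sigma>_def)
  show "\<forall>t\<ge>0. (\<sigma> has_integral uI t - uI 0) {0..t}"
    using cl unfolding closed_loop_sol_def e by blast
qed

lemma uI_range: "0 \<le> t \<Longrightarrow> uI t \<in> {a..b}"
proof -
  assume t: "0 \<le> t"
  have u0: "uI 0 \<in> {a..b}" using XT_sub[OF init] by simp
  have "uI t \<le> max (uI 0) umax"
    by (rule I.upper_inv[OF _ _ t]) (auto simp: \<sigma>_def intro!: sat_nonpos umin_umax)
  moreover have "min (uI 0) umin \<le> uI t"
    by (rule I.lower_inv[OF _ _ t]) (auto simp: \<sigma>_def intro!: sat_nonneg umin_umax)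
  ultimately show ?thesis using u0 ab by auto
qed

lemma r_g_bound: "p \<in> cball 0 Rs \<Longrightarrow> \<bar>r - g p\<bar> \<le> 2 * Gb"
proof -
  assume p: "p \<in> cball 0 Rs"
  have "norm (\<Xi> umin) \<le> Rs - 1" "norm (\<Xi> umax) \<le> Rs - 1" using Xi_ball ab by auto
  then have "\<Xi> umin \<in> cball 0 Rs" "\<Xi> umax \<in> cball 0 Rs" by auto
  then have "\<bar>g (\<Xi> umin)\<bar> \<le> Gb" "\<bar>g (\<Xi> umax)\<bar> \<le> Gb" using Gb by auto
  then have "\<bar>r\<bar> \<le> Gb" using rY by auto
  moreover have "\<bar>g p\<bar> \<le> Gb" using Gb p by auto
  ultimately show ?thesis by simp
qed

lemma sigma_bound: "\<bar>\<sigma> s\<bar> \<le> k * \<bar>r - g (x s)\<bar>"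
  unfolding \<sigma>_def using sat_abs[of umin umax "uI s" "k * (r - g (x s))"] k0 by (simp add: abs_mult)

lemma uI_incr_bound:
  assumes "0 \<le> s" "s \<le> t" "0 \<le> Q" "\<And>\<tau>. \<tau> \<in> {s..t} \<Longrightarrow> \<bar>r - g (x \<tau>)\<bar> \<le> Q"
  shows "\<bar>uI t - uI s\<bar> \<le> k * Q * (t - s)"
proof (rule I.incr_bound[OF assms(1,2)])
  show "0 \<le> k * Q" using k0 assms by simp
  fix \<tau> assume "\<tau> \<in> {s..t}"
  then have "k * \<bar>r - g (x \<tau>)\<bar> \<le> k * Q" using assms k0 by (intro mult_left_mono) auto
  then show "\<bar>\<sigma> \<tau>\<bar> \<le> k * Q" using sigma_bound[of \<tau>] by simp
qed

end

lemma tri3: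
  fixes p q w s :: "'b::real_normed_vector"
  shows "norm (p - s) \<le> norm (p - q) + norm (q - w) + norm (w - s)"
proof -
  have "norm (p - s) = norm ((p - q) + (q - w) + (w - s))" by simp
  also have "\<dots> \<le> norm ((p - q) + (q - w)) + norm (w - s)" by (rule norm_triangle_ineq)
  also have "norm ((p - q) + (q - w)) \<le> norm (p - q) + norm (q - w)" by (rule norm_triangle_ineq)
  finally show ?thesis by simp
qed

context traj begin

lemma uu_bound:
  assumes "0 \<le> s" "s \<le> t" "0 \<le> Q" "\<And>\<tau>. \<tau> \<in> {s..t} \<Longrightarrow> \<bar>r - g (x \<tau>)\<bar> \<le> Q"
  shows "\<bar>uu t - uI s\<bar> \<le> k * Q * (t - s) + \<tau>p * k * Q" "\<bar>uu t - uI t\<bar> \<le> \<tau>p * k * Q"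
proof -
  have "\<bar>uI t - uI s\<bar> \<le> k * Q * (t - s)" by (rule uI_incr_bound[OF assms])
  moreover have "\<bar>\<tau>p * k * (r - g (x t))\<bar> \<le> \<tau>p * k * Q"
  proof -
    have "\<bar>\<tau>p * k * (r - g (x t))\<bar> = \<tau>p * k * \<bar>r - g (x t)\<bar>" using taup k0 by (simp add: abs_mult)
    also have "\<dots> \<le> \<tau>p * k * Q" using assms(4)[of t] assms(1,2) taup k0 by (intro mult_left_mono) auto
    finally show ?thesis .
  qed
  ultimately show "\<bar>uu t - uI s\<bar> \<le> k * Q * (t - s) + \<tau>p * k * Q" "\<bar>uu t - uI t\<bar> \<le> \<tau>p * k * Q"
    unfolding uu_def by linarith+
qed

lemma uu_W:
  assumes "0 \<le> t" "\<bar>uu t - uI t\<bar> \<le> \<tau>p * k * (2 * Gb)"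
  shows "uu t \<in> {a-1..b+1}"
proof -
  have "\<tau>p * k * (2 * Gb) \<le> 1" using k2 by (simp add: mult_ac)
  then show ?thesis using uI_range[OF assms(1)] assms(2) by auto
qed

lemma phase1: "(\<forall>t\<in>{0..T1}. norm (x t) \<le> Rs) \<and> norm (x T1 - \<Xi> (uI T1)) \<le> \<epsilon>0"
proof -
  define u0 where "u0 = uI 0"
  have u0ab: "u0 \<in> {a..b}" using uI_range[of 0] by (simp add: u0_def)
  obtain \<psi> where \<psi>0: "\<psi> 0 = x 0" and \<psi>sol: "plant_sol f (\<lambda>_. u0) {0..} \<psi>"
    using frozen_exists[OF u0ab] by blast
  have \<psi>T: "plant_sol f (\<lambda>_. u0) {0..T} \<psi>" by (rule plant_sol_subset[OF \<psi>sol]) auto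
  have bR0: "\<forall>t\<in>{0..T}. norm (\<psi> t) \<le> R0"
    using R0(2) init \<psi>0 \<psi>T unfolding u0_def by force
  have eT: "norm (\<psi> T - \<Xi> u0) \<le> \<epsilon>0"
    using XTprop init \<psi>0 \<psi>T unfolding u0_def by force
  have \<psi>2: "plant_sol f (\<lambda>_. u0) {0..S} (\<lambda>s. \<psi> (T + s))"
    using plant_sol_subset[OF plant_sol_shift[OF \<psi>sol, of T]] Tpos by auto
  have A: "\<forall>s\<in>{0..S}. norm (\<psi> (T + s) - \<Xi> u0) \<le> m * exp (- lam * s) * norm (\<psi> (T + 0) - \<Xi> u0)"
    using A1prop[OF u0ab _ \<psi>2] S eT by simp
  have A': "norm (\<psi> (T + s) - \<Xi> u0) \<le> m * \<epsilon>0" if "s \<in> {0..S}" for s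
  proof -
    have "m * exp (- lam * s) * norm (\<psi> T - \<Xi> u0) \<le> m * 1 * \<epsilon>0"
      using that eT cnst_pos by (intro mult_mono) auto
    then show ?thesis using A that by force
  qed
  have AS: "norm (\<psi> T1 - \<Xi> u0) \<le> \<epsilon>0 / 4"
  proof -
    have "m * exp (- lam * S) * norm (\<psi> T - \<Xi> u0) \<le> (1/4) * \<epsilon>0"
      using S eT cnst_pos by (intro mult_mono) auto
    moreover have "norm (\<psi> (T + S) - \<Xi> u0) \<le> m * exp (- lam * S) * norm (\<psi> (T + 0) - \<Xi> u0)"
      using A S by auto
    ultimately show ?thesis unfolding T1_def by simp
  qed
  have \<psi>b: "norm (\<psi> t) \<le> Rs - 1" if "t \<in> {0..T1}" for t
  proof (cases "t \<le> T")
    case True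
    then have "norm (\<psi> t) \<le> R0" using bR0 that by auto
    moreover have "m * \<epsilon>0 \<ge> 0" using cnst_pos by simp
    ultimately show ?thesis using XM(1) unfolding Rs by linarith
  next
    case False
    then have "t - T \<in> {0..S}" using that unfolding T1_def by auto
    then have "norm (\<psi> (T + (t - T)) - \<Xi> u0) \<le> m * \<epsilon>0" by (rule A')
    then have "norm (\<psi> t - \<Xi> u0) \<le> m * \<epsilon>0" by simp
    moreover have "norm (\<Xi> u0) \<le> XM" using XM(2) u0ab by blast
    moreover have "norm (\<psi> t) \<le> norm (\<Xi> u0) + norm (\<psi> t - \<Xi> u0)"
      by (metis add.commute diff_add_cancel norm_triangle_ineq)
    ultimately show ?thesis using R0(1) unfolding Rs by linarith
  qed
  define \<eta> where "\<eta> = k * (T1 + \<tau>p) * (2 * Gb)"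
  have T1p: "T1 > 0" using cnst_pos by simp
  have cmp: "\<forall>t\<in>{0..T1}. norm (x t - \<psi> t) \<le> (0 + Lf*\<eta>*t) * exp (Lf*t) \<and> norm (x t) \<le> Rs"
  proof (rule compare[where F=f and u=uu and v="\<lambda>_. u0" and W="{a-1..b+1}"])
    show "0 \<le> T1" using T1p by simp
    show "0 < Lf" using Lf by simp
    show "0 \<le> \<eta>" unfolding \<eta>_def using k0 T1p taup Gb by simp
    show "0 \<le> (0::real)" by simp
    show "\<And>p q w1 w2. norm p \<le> Rs \<Longrightarrow> norm q \<le> Rs \<Longrightarrow> w1 \<in> {a-1..b+1} \<Longrightarrow> w2 \<in> {a-1..b+1} \<Longrightarrow>
          norm (f p w1 - f q w2) \<le> Lf * (norm (p - q) + \<bar>w1 - w2\<bar>)" using Lf by blast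
    show "\<forall>t\<in>{0..T1}. (x has_vector_derivative f (x t) (uu t)) (at t within {0..T1})"
      using plant_sol_subset[OF xsol, of "{0..T1}"] unfolding plant_sol_def by auto
    show "\<forall>t\<in>{0..T1}. (\<psi> has_vector_derivative f (\<psi> t) u0) (at t within {0..T1})"
      using plant_sol_subset[OF \<psi>sol, of "{0..T1}"] unfolding plant_sol_def by auto
    show "\<forall>t\<in>{0..T1}. norm (\<psi> t) \<le> Rs - 1 \<and> u0 \<in> {a-1..b+1}" using \<psi>b u0ab by auto
    show "\<forall>t\<in>{0..T1}. (\<forall>s\<in>{0..t}. norm (x s) \<le> Rs) \<longrightarrow> \<bar>uu t - u0\<bar> \<le> \<eta> \<and> uu t \<in> {a-1..b+1}"
    proof (intro ballI impI)
      fix t assume t: "t \<in> {0..T1}" and inb: "\<forall>s\<in>{0..t}. norm (x s) \<le> Rs"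
      have Q: "\<And>\<tau>. \<tau> \<in> {0..t} \<Longrightarrow> \<bar>r - g (x \<tau>)\<bar> \<le> 2 * Gb" using inb r_g_bound by auto
      have b1: "\<bar>uu t - uI 0\<bar> \<le> k * (2 * Gb) * (t - 0) + \<tau>p * k * (2 * Gb)"
        and b2: "\<bar>uu t - uI t\<bar> \<le> \<tau>p * k * (2 * Gb)"
        using uu_bound[of 0 t "2 * Gb"] t Q Gb by auto
      have "k * (2 * Gb) * (t - 0) \<le> k * (2 * Gb) * T1" using t k0 Gb by (intro mult_left_mono) auto
      then have "\<bar>uu t - u0\<bar> \<le> \<eta>" using b1 unfolding \<eta>_def u0_def by (simp add: algebra_simps)
      moreover have "uu t \<in> {a-1..b+1}" using uu_W b2 t by auto
      ultimately show "\<bar>uu t - u0\<bar> \<le> \<eta> \<and> uu t \<in> {a-1..b+1}" by blast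
    qed
    show "norm (x 0 - \<psi> 0) \<le> 0" using \<psi>0 by simp
    have "(0 + Lf * \<eta> * T1) * exp (Lf * T1) = k * c1" unfolding \<eta>_def c1_def by (simp add: mult_ac)
    then show "(0 + Lf * \<eta> * T1) * exp (Lf * T1) < 1" using k3 by simp
  qed
  have inb: "\<forall>t\<in>{0..T1}. norm (x t) \<le> Rs" using cmp by blast
  have d1: "norm (x T1 - \<psi> T1) \<le> k * c1"
  proof -
    have "norm (x T1 - \<psi> T1) \<le> (0 + Lf*\<eta>*T1) * exp (Lf*T1)" using cmp T1p by auto
    also have "\<dots> = k * c1" unfolding \<eta>_def c1_def by (simp add: mult_ac)
    finally show ?thesis .
  qed
  have "\<bar>uI T1 - uI 0\<bar> \<le> k * (2 * Gb) * (T1 - 0)"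
    by (rule uI_incr_bound) (use T1p Gb inb r_g_bound in auto)
  then have d2: "norm (\<Xi> u0 - \<Xi> (uI T1)) \<le> LX * (k * (2 * Gb) * T1)"
  proof -
    assume h: "\<bar>uI T1 - uI 0\<bar> \<le> k * (2 * Gb) * (T1 - 0)"
    have "norm (\<Xi> u0 - \<Xi> (uI T1)) \<le> LX * \<bar>u0 - uI T1\<bar>"
      using LX(2) u0ab uI_range[of T1] T1p by auto
    also have "\<dots> \<le> LX * (k * (2 * Gb) * T1)" using h LX(1) unfolding u0_def
      by (intro mult_left_mono) auto
    finally show ?thesis .
  qed
  have "norm (x T1 - \<Xi> (uI T1)) \<le> norm (x T1 - \<psi> T1) + norm (\<psi> T1 - \<Xi> u0) + norm (\<Xi> u0 - \<Xi> (uI T1))"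
    by (rule tri3)
  also have "\<dots> \<le> k * c1 + \<epsilon>0 / 4 + LX * (k * (2 * Gb) * T1)" using d1 d2 AS by linarith
  also have "\<dots> = k * (c1 + LX * T1 * (2 * Gb)) + \<epsilon>0 / 4" by (simp add: algebra_simps)
  also have "\<dots> \<le> \<epsilon>0" using k4 by simp
  finally show ?thesis using inb by blast
qed

end

context traj begin

lemma g_lip_use: "p \<in> cball 0 Rs \<Longrightarrow> q \<in> cball 0 Rs \<Longrightarrow> \<bar>g p - g q\<bar> \<le> Lg * norm (p - q)"
  using lipschitz_onD[OF Lg(2)] by (simp add: dist_norm)

lemma Xi_cball: "u \<in> {a..b} \<Longrightarrow> \<Xi> u \<in> cball 0 Rs"
  using Xi_ball by fastforce

lemma step_basic:
  assumes tn: "0 \<le> tn" and zn: "norm (x tn - \<Xi> (uI tn)) \<le> \<epsilon>0"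
  shows "\<exists>Qs. 0 \<le> Qs \<and> Qs \<le> cQ * (\<bar>uI tn - ur\<bar> + norm (x tn - \<Xi> (uI tn))) \<and>
    (\<forall>s\<in>{0..S}. norm (x (tn+s)) \<le> Rs \<and> \<bar>r - g (x (tn+s))\<bar> \<le> Qs \<and> \<bar>uI (tn+s) - uI tn\<bar> \<le> k*S*Qs \<and>
       norm (x (tn+s) - \<Xi> (uI (tn+s))) \<le> m * norm (x tn - \<Xi> (uI tn)) + k*c5*Qs) \<and>
    norm (x (tn+S) - \<Xi> (uI (tn+S))) \<le> norm (x tn - \<Xi> (uI tn)) / 4 + k*c5*Qs"
proof -
  define z where "z = norm (x tn - \<Xi> (uI tn))"
  define e where "e = \<bar>uI tn - ur\<bar>"
  define v where "v = uI tn"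
  have vab: "v \<in> {a..b}" using uI_range[OF tn] by (simp add: v_def)
  obtain \<psi> where \<psi>0: "\<psi> 0 = x tn" and \<psi>sol: "plant_sol f (\<lambda>_. v) {0..} \<psi>"
    using frozen_exists[OF vab] by blast
  have \<psi>S: "plant_sol f (\<lambda>_. v) {0..S} \<psi>" by (rule plant_sol_subset[OF \<psi>sol]) auto
  have z0: "norm (\<psi> 0 - \<Xi> v) = z" using \<psi>0 by (simp add: z_def v_def)
  have A: "\<forall>s\<in>{0..S}. norm (\<psi> s - \<Xi> v) \<le> m * exp (- lam * s) * z"
    using A1prop[OF vab _ \<psi>S] S zn z0 unfolding z_def v_def by auto
  have zpos: "z \<ge> 0" unfolding z_def by simp
  have A': "norm (\<psi> s - \<Xi> v) \<le> m * z" if "s \<in> {0..S}" for s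
  proof -
    have "m * exp (- lam * s) * z \<le> m * 1 * z"
      using that cnst_pos zpos by (intro mult_mono) auto
    then show ?thesis using A that by force
  qed
  have \<psi>b: "norm (\<psi> s) \<le> Rs - 1" if "s \<in> {0..S}" for s
  proof -
    have "m * z \<le> m * \<epsilon>0" using zn cnst_pos unfolding z_def by simp
    moreover have "norm (\<Xi> v) \<le> XM" using XM(2) vab by blast
    moreover have "norm (\<psi> s) \<le> norm (\<Xi> v) + norm (\<psi> s - \<Xi> v)"
      by (metis add.commute diff_add_cancel norm_triangle_ineq)
    ultimately show ?thesis using R0(1) A'[OF that] unfolding Rs by linarith
  qed
  define y where "y s = x (tn + s)" for s
  have ysol: "plant_sol f (\<lambda>s. uu (tn + s)) {0..S} y"
    unfolding y_def using plant_sol_subset[OF plant_sol_shift[OF xsol tn]] by auto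
  have ycont: "continuous_on {0..S} y" by (rule plant_sol_cont[OF ysol])
  have Slip: "\<And>p q w1 w2. norm p \<le> Rs \<Longrightarrow> norm q \<le> Rs \<Longrightarrow> w1 \<in> {a-1..b+1} \<Longrightarrow> w2 \<in> {a-1..b+1} \<Longrightarrow>
          norm (f p w1 - f q w2) \<le> Lf * (norm (p - q) + \<bar>w1 - w2\<bar>)" using Lf by blast
  have yder: "\<forall>t\<in>{0..S}. (y has_vector_derivative f (y t) (uu (tn + t))) (at t within {0..S})"
    using ysol unfolding plant_sol_def by auto
  have \<psi>der: "\<forall>t\<in>{0..S}. (\<psi> has_vector_derivative f (\<psi> t) v) (at t within {0..S})"
    using \<psi>S unfolding plant_sol_def by auto
  have \<psi>bW: "\<forall>t\<in>{0..S}. norm (\<psi> t) \<le> Rs - 1 \<and> v \<in> {a-1..b+1}" using \<psi>b vab by auto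
  have ub_gen: "\<bar>uu (tn + t) - v\<bar> \<le> k * (S + \<tau>p) * Q \<and> uu (tn + t) \<in> {a-1..b+1}"
    if t: "t \<in> {0..S}" and Q: "\<And>\<tau>. \<tau> \<in> {0..t} \<Longrightarrow> \<bar>r - g (y \<tau>)\<bar> \<le> Q" and QG: "Q \<le> 2 * Gb" "0 \<le> Q" for t Q
  proof -
    have Q': "\<And>\<tau>. \<tau> \<in> {tn..tn+t} \<Longrightarrow> \<bar>r - g (x \<tau>)\<bar> \<le> Q"
    proof -
      fix \<tau> assume "\<tau> \<in> {tn..tn+t}"
      then have "\<tau> - tn \<in> {0..t}" by auto
      from Q[OF this] show "\<bar>r - g (x \<tau>)\<bar> \<le> Q" by (simp add: y_def)
    qed
    have b1: "\<bar>uu (tn+t) - uI tn\<bar> \<le> k * Q * (tn + t - tn) + \<tau>p * k * Q"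
      and b2: "\<bar>uu (tn+t) - uI (tn+t)\<bar> \<le> \<tau>p * k * Q"
      using uu_bound[of tn "tn + t" Q] tn t Q' QG by auto
    have "k * Q * (tn + t - tn) \<le> k * Q * S" using t k0 QG by (intro mult_left_mono) auto
    then have "\<bar>uu (tn+t) - v\<bar> \<le> k * (S + \<tau>p) * Q" using b1 unfolding v_def by (simp add: algebra_simps)
    moreover have "\<tau>p * k * Q \<le> \<tau>p * k * (2 * Gb)" using QG taup k0 by (intro mult_left_mono) auto
    then have "uu (tn+t) \<in> {a-1..b+1}" using uu_W b2 t tn by auto
    ultimately show ?thesis by blast
  qed
  define \<eta> where "\<eta> = k * (S + \<tau>p) * (2 * Gb)"
  have small0: "(0 + Lf * \<eta> * S) * exp (Lf * S) < 1"
  proof -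
    have "(0 + Lf * \<eta> * S) * exp (Lf * S) = k * (Lf * (S + \<tau>p) * (2 * Gb) * S * exp (Lf * S))"
      unfolding \<eta>_def by (simp add: mult_ac)
    then show ?thesis using k5 by linarith
  qed
  have crude: "\<forall>t\<in>{0..S}. norm (y t - \<psi> t) \<le> (0 + Lf*\<eta>*t) * exp (Lf*t) \<and> norm (y t) \<le> Rs"
  proof (rule compare[where F=f and u="\<lambda>s. uu (tn + s)" and v="\<lambda>_. v" and W="{a-1..b+1}", OF _ _ _ _ Slip yder \<psi>der \<psi>bW])
    show "0 \<le> S" using S by simp
    show "0 < Lf" using Lf by simp
    show "0 \<le> \<eta>" unfolding \<eta>_def using k0 S taup Gb by simp
    show "0 \<le> (0::real)" by simp
    show "norm (y 0 - \<psi> 0) \<le> 0" using \<psi>0 by (simp add: y_def)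
    show "(0 + Lf * \<eta> * S) * exp (Lf * S) < 1" by (rule small0)
    show "\<forall>t\<in>{0..S}. (\<forall>s\<in>{0..t}. norm (y s) \<le> Rs) \<longrightarrow> \<bar>uu (tn + t) - v\<bar> \<le> \<eta> \<and> uu (tn + t) \<in> {a-1..b+1}"
    proof (intro ballI impI)
      fix t assume t: "t \<in> {0..S}" and inb: "\<forall>s\<in>{0..t}. norm (y s) \<le> Rs"
      show "\<bar>uu (tn + t) - v\<bar> \<le> \<eta> \<and> uu (tn + t) \<in> {a-1..b+1}"
        using ub_gen[OF t, of "2 * Gb"] inb r_g_bound Gb unfolding \<eta>_def by auto
    qed
  qed
  have inb: "\<forall>s\<in>{0..S}. norm (y s) \<le> Rs" using crude by blast
  have qcont: "continuous_on {0..S} (\<lambda>s. \<bar>r - g (y s)\<bar>)"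
  proof -
    have "y ` {0..S} \<subseteq> cball 0 Rs" using inb by auto
    then have "continuous_on {0..S} (\<lambda>s. g (y s))" using continuous_on_compose2[OF gcont ycont] by blast
    then show ?thesis by (intro continuous_intros)
  qed
  obtain ss where ss: "ss \<in> {0..S}" "\<forall>s\<in>{0..S}. \<bar>r - g (y s)\<bar> \<le> \<bar>r - g (y ss)\<bar>"
    using continuous_attains_sup[OF compact_Icc _ qcont] S by auto
  define Qs where "Qs = \<bar>r - g (y ss)\<bar>"
  have Qs0: "0 \<le> Qs" unfolding Qs_def by simp
  have QsG: "Qs \<le> 2 * Gb" unfolding Qs_def using r_g_bound inb ss by auto
  have Qsb: "\<forall>s\<in>{0..S}. \<bar>r - g (y s)\<bar> \<le> Qs" using ss unfolding Qs_def by blast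
  define \<eta>' where "\<eta>' = k * (S + \<tau>p) * Qs"
  have small1: "(0 + Lf * \<eta>' * S) * exp (Lf * S) < 1"
  proof -
    have "\<eta>' \<le> \<eta>" unfolding \<eta>'_def \<eta>_def using QsG k0 S taup by (intro mult_left_mono) auto
    then have "(0 + Lf * \<eta>' * S) * exp (Lf * S) \<le> (0 + Lf * \<eta> * S) * exp (Lf * S)"
      using Lf S by (intro mult_right_mono) auto
    then show ?thesis using small0 by simp
  qed
  have fine: "\<forall>t\<in>{0..S}. norm (y t - \<psi> t) \<le> (0 + Lf*\<eta>' * t) * exp (Lf*t) \<and> norm (y t) \<le> Rs"
  proof (rule compare[where F=f and u="\<lambda>s. uu (tn + s)" and v="\<lambda>_. v" and W="{a-1..b+1}", OF _ _ _ _ Slip yder \<psi>der \<psi>bW])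
    show "0 \<le> S" using S by simp
    show "0 < Lf" using Lf by simp
    show "0 \<le> \<eta>'" unfolding \<eta>'_def using k0 S taup Qs0 by simp
    show "0 \<le> (0::real)" by simp
    show "norm (y 0 - \<psi> 0) \<le> 0" using \<psi>0 by (simp add: y_def)
    show "(0 + Lf * \<eta>' * S) * exp (Lf * S) < 1" by (rule small1)
    show "\<forall>t\<in>{0..S}. (\<forall>s\<in>{0..t}. norm (y s) \<le> Rs) \<longrightarrow> \<bar>uu (tn + t) - v\<bar> \<le> \<eta>' \<and> uu (tn + t) \<in> {a-1..b+1}"
    proof (intro ballI impI)
      fix t assume t: "t \<in> {0..S}"
      show "\<bar>uu (tn + t) - v\<bar> \<le> \<eta>' \<and> uu (tn + t) \<in> {a-1..b+1}"
        using ub_gen[OF t, of Qs] Qsb t QsG Qs0 unfolding \<eta>'_def by auto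
    qed
  qed
  have dy: "norm (y w - \<psi> w) \<le> k * c3 * Qs" if s: "w \<in> {0..S}" for w
  proof -
    have "norm (y w - \<psi> w) \<le> (0 + Lf*\<eta>' * w) * exp (Lf*w)" using fine s by blast
    also have "\<dots> \<le> (0 + Lf*\<eta>' * S) * exp (Lf*S)"
    proof (intro mult_mono)
      show "0 + Lf * \<eta>' * w \<le> 0 + Lf * \<eta>' * S"
        using s Lf k0 S taup Qs0 unfolding \<eta>'_def by (intro add_left_mono mult_left_mono) auto
      show "exp (Lf * w) \<le> exp (Lf * S)" using s Lf by simp
      show "0 \<le> 0 + Lf * \<eta>' * S" using Lf k0 S taup Qs0 unfolding \<eta>'_def by simp
    qed simp
    also have "\<dots> = k * c3 * Qs" unfolding \<eta>'_def c3_def by (simp add: mult_ac)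
    finally show ?thesis .
  qed
  have du: "\<bar>uI (tn+s) - uI tn\<bar> \<le> k*S*Qs" if s: "s \<in> {0..S}" for s
  proof -
    have "\<bar>uI (tn+s) - uI tn\<bar> \<le> k * Qs * (tn + s - tn)"
    proof (rule uI_incr_bound)
      show "0 \<le> tn" "tn \<le> tn + s" "0 \<le> Qs" using tn s Qs0 by auto
      fix \<tau> assume "\<tau> \<in> {tn..tn+s}"
      then have "\<tau> - tn \<in> {0..S}" using s by auto
      from Qsb[rule_format, OF this] show "\<bar>r - g (x \<tau>)\<bar> \<le> Qs" by (simp add: y_def)
    qed
    also have "\<dots> \<le> k * Qs * S" using s k0 Qs0 by (intro mult_left_mono) auto
    finally show ?thesis by (simp add: mult_ac)
  qed
  have dz: "norm (y s - \<Xi> (uI (tn+s))) \<le> m * exp (- lam * s) * z + k * c5 * Qs" if s: "s \<in> {0..S}" for s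
  proof -
    have "norm (y s - \<Xi> (uI (tn+s))) \<le> norm (y s - \<psi> s) + norm (\<psi> s - \<Xi> v) + norm (\<Xi> v - \<Xi> (uI (tn+s)))"
      by (rule tri3)
    moreover have "norm (\<Xi> v - \<Xi> (uI (tn+s))) \<le> LX * (k*S*Qs)"
    proof -
      have "norm (\<Xi> v - \<Xi> (uI (tn+s))) \<le> LX * \<bar>v - uI (tn+s)\<bar>"
        using LX(2) vab uI_range[of "tn+s"] tn s by auto
      also have "\<dots> \<le> LX * (k*S*Qs)" using du[OF s] LX(1) unfolding v_def
        by (intro mult_left_mono) auto
      finally show ?thesis .
    qed
    moreover have "k * c3 * Qs + LX * (k*S*Qs) = k * c5 * Qs" unfolding c5_def by (simp add: algebra_simps)
    ultimately show ?thesis using dy[OF s] A s by force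
  qed
  have dz': "norm (y s - \<Xi> (uI (tn+s))) \<le> m * z + k * c5 * Qs" if s: "s \<in> {0..S}" for s
  proof -
    have "m * exp (- lam * s) * z \<le> m * 1 * z" using s cnst_pos zpos by (intro mult_mono) auto
    then show ?thesis using dz[OF s] by simp
  qed
  have dzS: "norm (y S - \<Xi> (uI (tn+S))) \<le> z / 4 + k * c5 * Qs"
  proof -
    have "m * exp (- lam * S) * z \<le> (1/4) * z" using S zpos by (intro mult_right_mono) auto
    then show ?thesis using dz[of S] S by simp
  qed
  have Qsbound: "Qs \<le> cQ * (e + z)"
  proof -
    have ssab: "uI (tn+ss) \<in> {a..b}" using uI_range[of "tn+ss"] tn ss by auto
    have "Qs = \<bar>g (\<Xi> ur) - g (y ss)\<bar>" unfolding Qs_def using ur by simp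
    also have "\<dots> \<le> \<bar>g (\<Xi> ur) - g (\<Xi> (uI (tn+ss)))\<bar> + \<bar>g (\<Xi> (uI (tn+ss))) - g (y ss)\<bar>" by simp
    also have "\<bar>g (\<Xi> ur) - g (\<Xi> (uI (tn+ss)))\<bar> \<le> Lg * norm (\<Xi> ur - \<Xi> (uI (tn+ss)))"
      using g_lip_use Xi_cball ur_ab ssab by blast
    also have "Lg * norm (\<Xi> ur - \<Xi> (uI (tn+ss))) \<le> Lg * (LX * \<bar>ur - uI (tn+ss)\<bar>)"
      using LX(2) ur_ab ssab Lg(1) by (intro mult_left_mono) auto
    also have "\<bar>g (\<Xi> (uI (tn+ss))) - g (y ss)\<bar> \<le> Lg * norm (\<Xi> (uI (tn+ss)) - y ss)"
      using g_lip_use Xi_cball ssab inb ss by auto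
    also have "norm (\<Xi> (uI (tn+ss)) - y ss) \<le> m * z + k * c5 * Qs"
      using dz'[OF ss(1)] by (simp add: norm_minus_commute)
    finally have h1: "Qs \<le> Lg * (LX * \<bar>ur - uI (tn+ss)\<bar>) + Lg * (m * z + k * c5 * Qs)"
      using Lg(1) by (simp add: mult_left_mono)
    have "\<bar>ur - uI (tn+ss)\<bar> \<le> e + k*S*Qs" using du[OF ss(1)] unfolding e_def by linarith
    then have h2: "Lg * (LX * \<bar>ur - uI (tn+ss)\<bar>) \<le> Lg * (LX * (e + k*S*Qs))"
      using Lg(1) LX(1) by (intro mult_left_mono) auto
    have h3: "Lg * (LX * (e + k*S*Qs)) + Lg * (m * z + k * c5 * Qs) = Lg*LX*e + Lg*m*z + (k * c4) * Qs"
      unfolding c4_def c5_def by (simp add: algebra_simps)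
    have h4: "(k * c4) * Qs \<le> (1/2) * Qs" using k6 Qs0 by (intro mult_right_mono) auto
    define X where "X = Lg*LX*e + Lg*m*z"
    define W where "W = k * c4 * Qs"
    have h5: "Qs \<le> X + W" using h1 h2 h3 unfolding X_def W_def by linarith
    have "Qs \<le> 2 * X" using h5 h4 unfolding W_def by linarith
    then have "Qs \<le> 2 * (Lg*LX*e + Lg*m*z)" unfolding X_def .
    also have "\<dots> \<le> cQ * (e + z)"
    proof -
      have "Lg*LX*e \<le> (Lg*LX + Lg*m) * e" using Lg(1) cnst_pos unfolding e_def by (simp add: algebra_simps)
      moreover have "Lg*m*z \<le> (Lg*LX + Lg*m) * z" using Lg(1) LX(1) zpos by (simp add: algebra_simps)
      ultimately show ?thesis unfolding cQ_def by (simp add: algebra_simps)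
    qed
    finally show ?thesis .
  qed
  show ?thesis
  proof (intro exI[of _ Qs] conjI ballI)
    show "0 \<le> Qs" by (rule Qs0)
    show "Qs \<le> cQ * (\<bar>uI tn - ur\<bar> + norm (x tn - \<Xi> (uI tn)))" using Qsbound unfolding e_def z_def .
    fix s assume s: "s \<in> {0..S}"
    show "norm (x (tn+s)) \<le> Rs" using inb s by (simp add: y_def)
    show "\<bar>r - g (x (tn+s))\<bar> \<le> Qs" using Qsb s by (simp add: y_def)
    show "\<bar>uI (tn+s) - uI tn\<bar> \<le> k*S*Qs" by (rule du[OF s])
    show "norm (x (tn+s) - \<Xi> (uI (tn+s))) \<le> m * norm (x tn - \<Xi> (uI tn)) + k*c5*Qs"
      using dz'[OF s] unfolding y_def z_def .
  next
    show "norm (x (tn+S) - \<Xi> (uI (tn+S))) \<le> norm (x tn - \<Xi> (uI tn)) / 4 + k*c5*Qs"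
      using dzS unfolding y_def z_def .
  qed
qed

end

lemma arith_e0:
  fixes k \<mu> S Lg m c5 cQ c6 CC E z Qs e1 :: real
  assumes pos: "0 < k" "k \<le> 1" "0 \<le> \<mu>" "0 \<le> S" "0 \<le> Lg" "0 \<le> m" "0 \<le> c5" "0 \<le> c6"
    and c6: "c6 = (\<mu> * S^2 + S * Lg * c5) * cQ" and CC: "S * Lg * m + c6 \<le> CC" and k7: "k * c6 \<le> \<mu> * S / 2"
    and E: "0 \<le> E" and z: "0 \<le> z" and Q: "0 \<le> Qs" "Qs \<le> cQ * (E + z)"
    and e1: "e1 \<le> E + S * (- k * \<mu> * (E - k * S * Qs) + k * Lg * (m * z + k * c5 * Qs))"
  shows "e1 \<le> (1 - k * \<mu> * S / 2) * E + k * CC * z"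
proof -
  define P where "P = \<mu> * S^2 + S * Lg * c5"
  have P0: "P \<ge> 0" unfolding P_def using pos by simp
  have eq: "E + S * (- k * \<mu> * (E - k * S * Qs) + k * Lg * (m * z + k * c5 * Qs))
      = E - k * \<mu> * S * E + k * (k * (P * Qs)) + k * (S * Lg * m) * z"
    unfolding P_def by (simp add: algebra_simps power2_eq_square)
  have "P * Qs \<le> P * (cQ * (E + z))" using Q P0 by (intro mult_left_mono) auto
  also have "\<dots> = c6 * E + c6 * z" unfolding P_def c6 by (simp add: algebra_simps)
  finally have h1: "P * Qs \<le> c6 * E + c6 * z" .
  have "k * (P * Qs) \<le> k * (c6 * E + c6 * z)" using h1 pos by (intro mult_left_mono) auto
  also have "\<dots> = (k * c6) * E + k * c6 * z" by (simp add: algebra_simps)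
  also have "(k * c6) * E \<le> (\<mu> * S / 2) * E" using k7 E by (intro mult_right_mono) auto
  also have "k * c6 * z \<le> 1 * c6 * z" using pos z by (intro mult_right_mono) auto
  finally have h2: "k * (P * Qs) \<le> (\<mu> * S / 2) * E + c6 * z" by simp
  have h3: "k * (k * (P * Qs)) \<le> k * ((\<mu> * S / 2) * E + c6 * z)" using h2 pos by (intro mult_left_mono) auto
  have h4: "k * (S * Lg * m) * z + k * ((\<mu> * S / 2) * E + c6 * z) = k * (\<mu> * S / 2) * E + k * (S * Lg * m + c6) * z"
    by (simp add: algebra_simps)
  have h5: "k * (S * Lg * m + c6) * z \<le> k * CC * z"
    using pos z CC by (intro mult_right_mono mult_left_mono) auto
  have h6: "(1 - k * \<mu> * S / 2) * E = E - k * \<mu> * S * E + k * (\<mu> * S / 2) * E" by (simp add: algebra_simps)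
  show ?thesis using e1 eq h3 h4 h5 h6 by linarith
qed

context traj begin

lemma sigma_upper:
  assumes t: "0 \<le> \<tau>" and xb: "x \<tau> \<in> cball 0 Rs" and ge: "ur \<le> uI \<tau>"
  shows "\<sigma> \<tau> \<le> - k * \<mu> * (uI \<tau> - ur) + k * Lg * norm (x \<tau> - \<Xi> (uI \<tau>))"
proof -
  have uab: "uI \<tau> \<in> {a..b}" using uI_range[OF t] .
  have G: "g (\<Xi> (uI \<tau>)) - g (\<Xi> ur) \<ge> \<mu> * (uI \<tau> - ur)" using Gmono[OF ur_ab uab ge] .
  have L: "\<bar>g (\<Xi> (uI \<tau>)) - g (x \<tau>)\<bar> \<le> Lg * norm (\<Xi> (uI \<tau>) - x \<tau>)"
    using g_lip_use Xi_cball[OF uab] xb by blast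
  have "r - g (x \<tau>) = (g (\<Xi> ur) - g (\<Xi> (uI \<tau>))) + (g (\<Xi> (uI \<tau>)) - g (x \<tau>))" using ur by simp
  also have "\<dots> \<le> - \<mu> * (uI \<tau> - ur) + Lg * norm (x \<tau> - \<Xi> (uI \<tau>))"
    using G L by (simp add: norm_minus_commute)
  finally have w: "k * (r - g (x \<tau>)) \<le> k * (- \<mu> * (uI \<tau> - ur) + Lg * norm (x \<tau> - \<Xi> (uI \<tau>)))"
    using k0 by (intro mult_left_mono) auto
  show ?thesis unfolding \<sigma>_def
  proof (rule sat_le[OF umin_umax])
    show "k * (r - g (x \<tau>)) \<le> - k * \<mu> * (uI \<tau> - ur) + k * Lg * norm (x \<tau> - \<Xi> (uI \<tau>))"
      using w by (simp add: algebra_simps)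
    assume "uI \<tau> \<le> umin"
    then have "uI \<tau> = ur" using ge ur by auto
    then show "0 \<le> - k * \<mu> * (uI \<tau> - ur) + k * Lg * norm (x \<tau> - \<Xi> (uI \<tau>))" using k0 Lg by simp
  qed
qed

lemma sigma_lower:
  assumes t: "0 \<le> \<tau>" and xb: "x \<tau> \<in> cball 0 Rs" and le: "uI \<tau> \<le> ur"
  shows "- k * \<mu> * (uI \<tau> - ur) - k * Lg * norm (x \<tau> - \<Xi> (uI \<tau>)) \<le> \<sigma> \<tau>"
proof -
  have uab: "uI \<tau> \<in> {a..b}" using uI_range[OF t] .
  have G: "g (\<Xi> ur) - g (\<Xi> (uI \<tau>)) \<ge> \<mu> * (ur - uI \<tau>)" using Gmono[OF uab ur_ab le] .
  have L: "\<bar>g (\<Xi> (uI \<tau>)) - g (x \<tau>)\<bar> \<le> Lg * norm (\<Xi> (uI \<tau>) - x \<tau>)"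
    using g_lip_use Xi_cball[OF uab] xb by blast
  have "- \<mu> * (uI \<tau> - ur) - Lg * norm (x \<tau> - \<Xi> (uI \<tau>)) \<le> (g (\<Xi> ur) - g (\<Xi> (uI \<tau>))) + (g (\<Xi> (uI \<tau>)) - g (x \<tau>))"
    using G L by (simp add: norm_minus_commute algebra_simps)
  also have "\<dots> = r - g (x \<tau>)" using ur by simp
  finally have w: "k * (- \<mu> * (uI \<tau> - ur) - Lg * norm (x \<tau> - \<Xi> (uI \<tau>))) \<le> k * (r - g (x \<tau>))"
    using k0 by (intro mult_left_mono) auto
  show ?thesis unfolding \<sigma>_def
  proof (rule sat_ge[OF umin_umax])
    show "- k * \<mu> * (uI \<tau> - ur) - k * Lg * norm (x \<tau> - \<Xi> (uI \<tau>)) \<le> k * (r - g (x \<tau>))"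
      using w by (simp add: algebra_simps)
    assume "umax \<le> uI \<tau>"
    then have "uI \<tau> = ur" using le ur by auto
    then show "- k * \<mu> * (uI \<tau> - ur) - k * Lg * norm (x \<tau> - \<Xi> (uI \<tau>)) \<le> 0" using k0 Lg by simp
  qed
qed

lemma arith_e:
  assumes E: "0 \<le> E" and z: "0 \<le> z" and Q: "0 \<le> Qs" "Qs \<le> cQ * (E + z)"
    and e1: "e1 \<le> E + S * (- k * \<mu> * (E - k * S * Qs) + k * Lg * (m * z + k * c5 * Qs))"
  shows "e1 \<le> (1 - k * \<mu> * S / 2) * E + k * CC * z"
proof (rule arith_e0[OF _ _ _ _ _ _ _ _ c6_def _ k7 E z Q e1])
  show "S * Lg * m + c6 \<le> CC" unfolding CC_def using S cnst_pos by simp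
qed (use k0 k1 cnst_pos S Lg in auto)

lemma step_e:
  assumes tn: "0 \<le> tn" and Q: "0 \<le> Qs" "Qs \<le> cQ * (\<bar>uI tn - ur\<bar> + norm (x tn - \<Xi> (uI tn)))"
    and B: "\<forall>s\<in>{0..S}. norm (x (tn+s)) \<le> Rs \<and> \<bar>r - g (x (tn+s))\<bar> \<le> Qs \<and> \<bar>uI (tn+s) - uI tn\<bar> \<le> k*S*Qs \<and>
       norm (x (tn+s) - \<Xi> (uI (tn+s))) \<le> m * norm (x tn - \<Xi> (uI tn)) + k*c5*Qs"
  shows "\<bar>uI (tn+S) - ur\<bar> \<le> (1 - k * \<mu> * S / 2) * \<bar>uI tn - ur\<bar> + k * CC * norm (x tn - \<Xi> (uI tn))"
proof -
  define z where "z = norm (x tn - \<Xi> (uI tn))"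
  define e0 where "e0 = uI tn - ur"
  have z0: "0 \<le> z" unfolding z_def by simp
  have integ: "(\<sigma> has_integral (uI (tn+S) - uI tn)) {tn..tn+S}"
    using I.incr[of tn "tn+S"] tn S by auto
  have Bt: "norm (x \<tau>) \<le> Rs \<and> \<bar>uI \<tau> - uI tn\<bar> \<le> k*S*Qs \<and> norm (x \<tau> - \<Xi> (uI \<tau>)) \<le> m * z + k*c5*Qs"
    if "\<tau> \<in> {tn..tn+S}" for \<tau>
  proof -
    have "\<tau> - tn \<in> {0..S}" using that by auto
    from B[rule_format, OF this] show ?thesis unfolding z_def by simp
  qed
  have cont_S: "Henstock_Kurzweil_Integration.content {tn..tn+S} = S" using S by simp
  have kSQ: "0 \<le> k * S * Qs" using k0 S Q by simp
  consider (A) "e0 \<ge> 2 * (k * S * Qs)" | (B) "e0 \<le> - 2 * (k * S * Qs)" | (C) "\<bar>e0\<bar> < 2 * (k * S * Qs)" by linarith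
  then show ?thesis
  proof cases
    case A
    define cc where "cc = - k * \<mu> * (e0 - k * S * Qs) + k * Lg * (m * z + k * c5 * Qs)"
    have le: "\<sigma> \<tau> \<le> cc" if \<tau>: "\<tau> \<in> {tn..tn+S}" for \<tau>
    proof -
      have t0: "0 \<le> \<tau>" using \<tau> tn by auto
      have eb: "uI \<tau> - ur \<ge> e0 - k * S * Qs" using Bt[OF \<tau>] unfolding e0_def by linarith
      then have ge: "ur \<le> uI \<tau>" using A kSQ by linarith
      have "\<sigma> \<tau> \<le> - k * \<mu> * (uI \<tau> - ur) + k * Lg * norm (x \<tau> - \<Xi> (uI \<tau>))"
        using sigma_upper[OF t0 _ ge] Bt[OF \<tau>] by simp
      also have "- k * \<mu> * (uI \<tau> - ur) \<le> - k * \<mu> * (e0 - k * S * Qs)"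
        using eb k0 cnst_pos by (simp add: mult_left_mono)
      also have "k * Lg * norm (x \<tau> - \<Xi> (uI \<tau>)) \<le> k * Lg * (m * z + k * c5 * Qs)"
        using Bt[OF \<tau>] k0 Lg by (intro mult_left_mono) auto
      finally show ?thesis unfolding cc_def by simp
    qed
    have "uI (tn+S) - uI tn \<le> Henstock_Kurzweil_Integration.content {tn..tn+S} *\<^sub>R cc"
      by (rule has_integral_le[OF integ has_integral_const_real]) (use le in auto)
    then have up: "uI (tn+S) - ur \<le> e0 + S * cc" using cont_S unfolding e0_def by simp
    have lo: "uI (tn+S) - ur \<ge> 0" using Bt[of "tn+S"] S A unfolding e0_def by auto
    have "uI (tn+S) - ur \<le> (1 - k * \<mu> * S / 2) * e0 + k * CC * z"
      by (rule arith_e[OF _ z0 Q(1)]) (use A kSQ up Q(2) in \<open>auto simp: cc_def e0_def z_def\<close>)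
    then show ?thesis using lo A kSQ unfolding e0_def z_def by simp
  next
    case B
    define cc where "cc = - k * \<mu> * (e0 + k * S * Qs) - k * Lg * (m * z + k * c5 * Qs)"
    have le: "cc \<le> \<sigma> \<tau>" if \<tau>: "\<tau> \<in> {tn..tn+S}" for \<tau>
    proof -
      have t0: "0 \<le> \<tau>" using \<tau> tn by auto
      have eb: "uI \<tau> - ur \<le> e0 + k * S * Qs" using Bt[OF \<tau>] unfolding e0_def by linarith
      then have le': "uI \<tau> \<le> ur" using B kSQ by linarith
      have "- k * \<mu> * (e0 + k * S * Qs) \<le> - k * \<mu> * (uI \<tau> - ur)"
        using eb k0 cnst_pos by (simp add: mult_left_mono)
      moreover have "k * Lg * norm (x \<tau> - \<Xi> (uI \<tau>)) \<le> k * Lg * (m * z + k * c5 * Qs)"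
        using Bt[OF \<tau>] k0 Lg by (intro mult_left_mono) auto
      moreover have "- k * \<mu> * (uI \<tau> - ur) - k * Lg * norm (x \<tau> - \<Xi> (uI \<tau>)) \<le> \<sigma> \<tau>"
        using sigma_lower[OF t0 _ le'] Bt[OF \<tau>] by simp
      ultimately show ?thesis unfolding cc_def by linarith
    qed
    have "Henstock_Kurzweil_Integration.content {tn..tn+S} *\<^sub>R cc \<le> uI (tn+S) - uI tn"
      by (rule has_integral_le[OF has_integral_const_real integ]) (use le in auto)
    then have up: "ur - uI (tn+S) \<le> - e0 - S * cc" using cont_S unfolding e0_def by simp
    have lo: "uI (tn+S) - ur \<le> 0" using Bt[of "tn+S"] S B unfolding e0_def by auto
    have "ur - uI (tn+S) \<le> (1 - k * \<mu> * S / 2) * (- e0) + k * CC * z"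
      by (rule arith_e[OF _ z0 Q(1)]) (use B kSQ up Q(2) in \<open>auto simp: cc_def e0_def z_def algebra_simps\<close>)
    then show ?thesis using lo B kSQ unfolding e0_def z_def by simp
  next
    case C
    have "\<bar>uI (tn+S) - ur\<bar> \<le> \<bar>e0\<bar> + k * S * Qs" using Bt[of "tn+S"] S unfolding e0_def by auto
    also have "\<dots> \<le> 3 * (k * S * Qs)" using C by (simp add: mult_ac)
    also have "3 * (k * S * Qs) \<le> 3 * (k * S * (cQ * (\<bar>e0\<bar> + z)))"
      using Q(2) k0 S unfolding e0_def z_def by (intro mult_left_mono) auto
    also have "\<dots> = (k * (3 * S * cQ)) * \<bar>e0\<bar> + k * (3 * S * cQ) * z" by (simp add: algebra_simps)
    also have "(k * (3 * S * cQ)) * \<bar>e0\<bar> \<le> (1 - k * \<mu> * S / 2) * \<bar>e0\<bar>"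
      using k8 by (intro mult_right_mono) (auto simp: algebra_simps)
    also have "k * (3 * S * cQ) * z \<le> k * CC * z"
      unfolding CC_def using k0 z0 S Lg cnst_pos by (intro mult_right_mono mult_left_mono) auto
    finally show ?thesis unfolding e0_def z_def by simp
  qed
qed

end

lemma arith_V0:
  fixes k \<mu> S \<beta> c5 cQ CC E z Qs e1 z1 :: real
  assumes pos: "0 < k" "0 \<le> \<beta>" "0 \<le> c5" "0 \<le> cQ"
    and hb: "\<beta> * (c5 * cQ) = \<mu> * S / 4"
    and k10: "k * (CC + \<beta> * c5 * cQ + \<beta> * \<mu> * S / 4) \<le> 3 * \<beta> / 4"
    and E: "0 \<le> E" and z: "0 \<le> z" and Q: "Qs \<le> cQ * (E + z)"
    and e1: "e1 \<le> (1 - k * \<mu> * S / 2) * E + k * CC * z"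
    and z1: "z1 \<le> z / 4 + k * c5 * Qs"
  shows "e1 + \<beta> * z1 \<le> (1 - k * \<mu> * S / 4) * (E + \<beta> * z)"
proof -
  have h1: "\<beta> * z1 \<le> \<beta> * (z / 4 + k * c5 * Qs)" using z1 pos by (intro mult_left_mono) auto
  have "\<beta> * k * c5 * Qs \<le> \<beta> * k * c5 * (cQ * (E + z))" using Q pos by (intro mult_left_mono) auto
  also have "\<dots> = k * (\<beta> * (c5 * cQ)) * E + k * (\<beta> * (c5 * cQ)) * z" by (simp add: algebra_simps)
  also have "\<dots> = k * (\<mu> * S / 4) * E + k * (\<beta> * c5 * cQ) * z" using hb by (simp add: mult_ac)
  finally have h2: "\<beta> * k * c5 * Qs \<le> k * (\<mu> * S / 4) * E + k * (\<beta> * c5 * cQ) * z" .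
  have h3: "\<beta> * (z / 4 + k * c5 * Qs) = \<beta> / 4 * z + \<beta> * k * c5 * Qs" by (simp add: algebra_simps)
  have "(k * CC + \<beta> / 4 + k * (\<beta> * c5 * cQ)) * z \<le> ((1 - k * \<mu> * S / 4) * \<beta>) * z"
    using k10 z by (intro mult_right_mono) (auto simp: algebra_simps)
  then have h4: "k * CC * z + \<beta> / 4 * z + k * (\<beta> * c5 * cQ) * z \<le> (1 - k * \<mu> * S / 4) * \<beta> * z"
    by (simp add: algebra_simps)
  have h5: "(1 - k * \<mu> * S / 4) * (E + \<beta> * z) = (1 - k * \<mu> * S / 2) * E + k * (\<mu> * S / 4) * E + (1 - k * \<mu> * S / 4) * \<beta> * z"
    by (simp add: algebra_simps)
  show ?thesis using e1 h1 h2 h3 h4 h5 by linarith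
qed

context traj begin

definition "tt n = T1 + real n * S" for n
definition "zz n = norm (x (tt n) - \<Xi> (uI (tt n)))" for n
definition "ee n = \<bar>uI (tt n) - ur\<bar>" for n
definition "V n = ee n + \<beta> * zz n" for n
definition "\<rho> = 1 - k * \<mu> * S / 4"

lemma tt_nonneg: "tt n \<ge> 0" unfolding tt_def using cnst_pos S by simp

lemma tt_Suc: "tt (Suc n) = tt n + S" unfolding tt_def by (simp add: algebra_simps)

lemma rho: "0 < \<rho>" "\<rho> < 1"
proof -
  have "k * (\<mu> * S / 2) \<le> k * (3 * S * cQ + \<mu> * S / 2)" using k0 S cnst_pos by (intro mult_left_mono) auto
  then have "k * (\<mu> * S / 2) \<le> 1" using k8 by linarith
  then show "0 < \<rho>" unfolding \<rho>_def by (simp add: algebra_simps)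
  show "\<rho> < 1" unfolding \<rho>_def using k0 S cnst_pos by simp
qed

lemma ee_bound: "ee n \<le> b - a"
  using uI_range[OF tt_nonneg[of n]] ur_ab unfolding ee_def by auto

lemma iter: "zz n \<le> \<epsilon>0 \<and> V n \<le> \<rho>^n * V 0"
proof (induction n)
  case 0
  have "zz 0 \<le> \<epsilon>0" using phase1 unfolding zz_def tt_def by simp
  then show ?case by simp
next
  case (Suc n)
  have zn: "zz n \<le> \<epsilon>0" and Vn: "V n \<le> \<rho>^n * V 0" using Suc by auto
  obtain Qs where Q: "0 \<le> Qs" "Qs \<le> cQ * (\<bar>uI (tt n) - ur\<bar> + norm (x (tt n) - \<Xi> (uI (tt n))))"
    and B: "\<forall>s\<in>{0..S}. norm (x (tt n+s)) \<le> Rs \<and> \<bar>r - g (x (tt n+s))\<bar> \<le> Qs \<and> \<bar>uI (tt n+s) - uI (tt n)\<bar> \<le> k*S*Qs \<and>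
       norm (x (tt n+s) - \<Xi> (uI (tt n+s))) \<le> m * norm (x (tt n) - \<Xi> (uI (tt n))) + k*c5*Qs"
    and zS: "norm (x (tt n+S) - \<Xi> (uI (tt n+S))) \<le> norm (x (tt n) - \<Xi> (uI (tt n))) / 4 + k*c5*Qs"
    using step_basic[OF tt_nonneg zn[unfolded zz_def]] by blast
  have e1: "ee (Suc n) \<le> (1 - k * \<mu> * S / 2) * ee n + k * CC * zz n"
    using step_e[OF tt_nonneg Q B] unfolding ee_def zz_def tt_Suc .
  have z1: "zz (Suc n) \<le> zz n / 4 + k * c5 * Qs" using zS unfolding zz_def tt_Suc .
  have Q': "Qs \<le> cQ * (ee n + zz n)" using Q(2) unfolding ee_def zz_def .
  have zpos: "0 \<le> zz n" and epos: "0 \<le> ee n" unfolding zz_def ee_def by auto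
  have "k * c5 * Qs \<le> k * c5 * (cQ * (ee n + zz n))" using Q' k0 cnst_pos by (intro mult_left_mono) auto
  also have "\<dots> \<le> k * c5 * (cQ * (b - a + \<epsilon>0))"
    using ee_bound[of n] zn k0 cnst_pos by (intro mult_left_mono add_mono) auto
  also have "\<dots> = k * (c5 * cQ * (b - a + \<epsilon>0))" by (simp add: mult_ac)
  also have "\<dots> \<le> 3 * \<epsilon>0 / 4" by (rule k9)
  finally have "zz (Suc n) \<le> \<epsilon>0" using z1 zn by linarith
  moreover have "V (Suc n) \<le> \<rho> * V n"
  proof -
    have hb: "\<beta> * (c5 * cQ) = \<mu> * S / 4" unfolding \<beta>_def using cnst_pos by (simp add: field_simps)
    have "ee (Suc n) + \<beta> * zz (Suc n) \<le> (1 - k * \<mu> * S / 4) * (ee n + \<beta> * zz n)"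
      by (rule arith_V0[OF k0 _ _ _ hb k10 epos zpos Q' e1 z1]) (use cnst_pos in auto)
    then show ?thesis unfolding V_def \<rho>_def .
  qed
  moreover have "\<rho> * V n \<le> \<rho> * (\<rho>^n * V 0)" using Vn rho by (intro mult_left_mono) auto
  ultimately show ?case by simp
qed

end

context traj begin

lemma V_nonneg: "0 \<le> V n" unfolding V_def ee_def zz_def using cnst_pos by simp

lemma rho_pow: "\<rho>^n \<le> exp ((- ln \<rho> / S) * (T1 + S)) * exp (- (- ln \<rho> / S) * t)" if "T1 + real n * S + S > t" for n t
proof -
  define \<nu> where "\<nu> = - ln \<rho> / S"
  have \<nu>: "\<nu> > 0" unfolding \<nu>_def using ln_less_zero[OF rho(1,2)] S by (intro divide_pos_pos) auto
  have "\<rho>^n = exp (real n * ln \<rho>)" using rho by (simp add: exp_of_nat_mult)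
  also have "real n * ln \<rho> = - \<nu> * (real n * S)" unfolding \<nu>_def using S by simp
  also have "- \<nu> * (real n * S) \<le> - \<nu> * (t - T1 - S)" using that \<nu> by (intro mult_left_mono_neg) auto
  also have "exp (- \<nu> * (t - T1 - S)) = exp (\<nu> * (T1 + S)) * exp (- \<nu> * t)"
    by (simp add: exp_add[symmetric] algebra_simps)
  finally show ?thesis unfolding \<nu>_def by simp
qed

lemma expo: "\<exists>M \<nu>. M > 0 \<and> \<nu> > 0 \<and> (\<forall>t\<ge>0. norm (x t - \<Xi> ur) \<le> M * exp (- \<nu> * t) \<and>
   \<bar>uu t - ur\<bar> \<le> M * exp (- \<nu> * t) \<and> \<bar>g (x t) - r\<bar> \<le> M * exp (- \<nu> * t))"
proof -
  define \<nu> where "\<nu> = - ln \<rho> / S"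
  have \<nu>: "\<nu> > 0" unfolding \<nu>_def using ln_less_zero[OF rho(1,2)] S by (intro divide_pos_pos) auto
  define K1 where "K1 = 1 + k*S*cQ + m + k*c5*cQ + cQ"
  define Kc where "Kc = (1 + LX + \<tau>p) * K1 * (1 + 1/\<beta>)"
  define B0 where "B0 = Rs + XM + (b - a) + \<tau>p * (2 * Gb) + 2 * Gb"
  define M where "M = B0 * exp (\<nu> * T1) + Kc * V 0 * exp (\<nu> * (T1 + S)) + 1"
  have tg: "\<tau>p * (2 * Gb) \<ge> 0" using taup Gb by simp
  have B0p: "B0 \<ge> 0" unfolding B0_def using cnst_pos XM Gb taup ab by simp
  have K1p: "K1 \<ge> 0" unfolding K1_def using k0 S cnst_pos by simp
  have Kcp: "Kc \<ge> 0" unfolding Kc_def using K1p LX taup cnst_pos by simp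
  have V0: "V 0 \<ge> 0" by (rule V_nonneg)
  have Mp: "M > 0" unfolding M_def using B0p Kcp V0 by (simp add: add_nonneg_pos)
  have Mge1: "B0 * exp (\<nu> * T1) * exp (- \<nu> * t) \<le> M * exp (- \<nu> * t)" for t
    unfolding M_def using Kcp V0 by (intro mult_right_mono) auto
  have Mge2: "Kc * V 0 * exp (\<nu> * (T1 + S)) * exp (- \<nu> * t) \<le> M * exp (- \<nu> * t)" for t
    unfolding M_def using B0p by (intro mult_right_mono) auto
  have main: "norm (x t - \<Xi> ur) \<le> M * exp (- \<nu> * t) \<and>
   \<bar>uu t - ur\<bar> \<le> M * exp (- \<nu> * t) \<and> \<bar>g (x t) - r\<bar> \<le> M * exp (- \<nu> * t)" if t: "t \<ge> 0" for t
  proof (cases "t \<le> T1")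
    case True
    have xb: "norm (x t) \<le> Rs" using phase1 t True by auto
    have "norm (x t - \<Xi> ur) \<le> norm (x t) + norm (\<Xi> ur)" by (rule norm_triangle_ineq4)
    also have "\<dots> \<le> Rs + XM" using xb XM(2) ur_ab by (intro add_mono) auto
    finally have b1: "norm (x t - \<Xi> ur) \<le> B0" unfolding B0_def using ab Gb tg by linarith
    have rg: "\<bar>r - g (x t)\<bar> \<le> 2 * Gb" using r_g_bound xb by auto
    then have b3: "\<bar>g (x t) - r\<bar> \<le> B0"
    proof -
      have "\<bar>g (x t) - r\<bar> = \<bar>r - g (x t)\<bar>" by (simp add: abs_minus_commute)
      then show ?thesis unfolding B0_def using rg ab Gb tg cnst_pos XM(1) by linarith
    qed
    have "\<bar>uu t - uI t\<bar> = \<tau>p * k * \<bar>r - g (x t)\<bar>" unfolding uu_def using taup k0 by (simp add: abs_mult)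
    also have "\<dots> \<le> \<tau>p * 1 * (2 * Gb)" using rg taup k0 k1 Gb by (intro mult_mono) auto
    finally have "\<bar>uu t - uI t\<bar> \<le> \<tau>p * (2 * Gb)" by simp
    moreover have "\<bar>uI t - ur\<bar> \<le> b - a" using uI_range[OF t] ur_ab by auto
    ultimately have b2: "\<bar>uu t - ur\<bar> \<le> B0" unfolding B0_def using cnst_pos XM Gb by linarith
    have "B0 \<le> B0 * exp (\<nu> * T1) * exp (- \<nu> * t)"
    proof -
      have "1 \<le> exp (\<nu> * T1) * exp (- \<nu> * t)"
        using True \<nu> by (simp add: exp_add[symmetric] algebra_simps mult_left_mono)
      then show ?thesis using B0p by (metis mult.assoc mult_le_cancel_left1 order.strict_iff_not)
    qed
    then have "B0 \<le> M * exp (- \<nu> * t)" using Mge1[of t] by linarith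
    then show ?thesis using b1 b2 b3 by linarith
  next
    case False
    define n where "n = nat \<lfloor>(t - T1) / S\<rfloor>"
    have fl: "real n = of_int \<lfloor>(t - T1) / S\<rfloor>" unfolding n_def using False S by simp
    have "real n \<le> (t - T1) / S" "(t - T1) / S < real n + 1" unfolding fl by linarith+
    then have nS: "real n * S \<le> t - T1" "t - T1 < real n * S + S" using S by (simp_all add: field_simps)
    define s where "s = t - tt n"
    have s: "s \<in> {0..S}" "tt n + s = t" unfolding s_def tt_def using nS by auto
    have zn: "zz n \<le> \<epsilon>0" using iter by blast
    obtain Qs where Q: "0 \<le> Qs" "Qs \<le> cQ * (\<bar>uI (tt n) - ur\<bar> + norm (x (tt n) - \<Xi> (uI (tt n))))"
      and B: "\<forall>s\<in>{0..S}. norm (x (tt n+s)) \<le> Rs \<and> \<bar>r - g (x (tt n+s))\<bar> \<le> Qs \<and> \<bar>uI (tt n+s) - uI (tt n)\<bar> \<le> k*S*Qs \<and>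
         norm (x (tt n+s) - \<Xi> (uI (tt n+s))) \<le> m * norm (x (tt n) - \<Xi> (uI (tt n))) + k*c5*Qs"
      using step_basic[OF tt_nonneg zn[unfolded zz_def]] by blast
    have Q': "Qs \<le> cQ * (ee n + zz n)" using Q(2) unfolding ee_def zz_def .
    have Bt: "\<bar>r - g (x t)\<bar> \<le> Qs" "\<bar>uI t - uI (tt n)\<bar> \<le> k*S*Qs"
      "norm (x t - \<Xi> (uI t)) \<le> m * zz n + k*c5*Qs"
      using B s unfolding zz_def by auto
    define Et where "Et = \<bar>uI t - ur\<bar>"
    define Zt where "Zt = norm (x t - \<Xi> (uI t))"
    define Qt where "Qt = \<bar>r - g (x t)\<bar>"
    define W where "W = Et + Zt + Qt"
    have Et: "Et \<le> ee n + k*S*Qs" using Bt(2) unfolding Et_def ee_def by linarith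
    have zpos: "0 \<le> zz n" and epos: "0 \<le> ee n" unfolding zz_def ee_def by auto
    have W1: "W \<le> ee n + m * zz n + (k*S + k*c5 + 1) * Qs"
      unfolding W_def using Et Bt(1,3) unfolding Zt_def Qt_def by (simp add: algebra_simps)
    have "(k*S + k*c5 + 1) * Qs \<le> (k*S + k*c5 + 1) * (cQ * (ee n + zz n))"
      using Q' k0 S cnst_pos by (intro mult_left_mono) auto
    then have "W \<le> ee n + m * zz n + (k*S + k*c5 + 1) * (cQ * (ee n + zz n))" using W1 by linarith
    also have "\<dots> \<le> K1 * (ee n + zz n)"
    proof -
      have "ee n + m * zz n \<le> (1 + m) * (ee n + zz n)" using zpos epos cnst_pos by (simp add: algebra_simps)
      moreover have "(k*S + k*c5 + 1) * (cQ * (ee n + zz n)) = (k*S*cQ + k*c5*cQ + cQ) * (ee n + zz n)"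
        by (simp add: algebra_simps)
      ultimately show ?thesis unfolding K1_def by (simp add: algebra_simps)
    qed
    also have "ee n + zz n \<le> (1 + 1/\<beta>) * V n"
    proof -
      have "zz n = (\<beta> * zz n) / \<beta>" using cnst_pos by simp
      also have "\<dots> \<le> V n / \<beta>" unfolding V_def using epos cnst_pos by (intro divide_right_mono) auto
      finally have a2: "zz n \<le> V n / \<beta>" .
      have a1: "ee n \<le> V n" unfolding V_def using cnst_pos zpos by simp
      have "(1 + 1/\<beta>) * V n = V n + V n / \<beta>" by (simp add: algebra_simps)
      then show ?thesis using a1 a2 by linarith
    qed
    then have "K1 * (ee n + zz n) \<le> K1 * ((1 + 1/\<beta>) * V n)" using K1p by (intro mult_left_mono)
    finally have Wb: "W \<le> K1 * ((1 + 1/\<beta>) * V n)" .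
    have Vb: "V n \<le> exp (\<nu> * (T1 + S)) * exp (- \<nu> * t) * V 0"
    proof -
      have "V n \<le> \<rho>^n * V 0" using iter by blast
      also have "\<rho>^n \<le> exp (\<nu> * (T1 + S)) * exp (- \<nu> * t)"
        unfolding \<nu>_def by (rule rho_pow) (use nS in auto)
      then have "\<rho>^n * V 0 \<le> exp (\<nu> * (T1 + S)) * exp (- \<nu> * t) * V 0" using V0 by (intro mult_right_mono)
      finally show ?thesis .
    qed
    have "(1 + LX + \<tau>p) * W \<le> (1 + LX + \<tau>p) * (K1 * ((1 + 1/\<beta>) * V n))"
      using Wb LX taup by (intro mult_left_mono) auto
    also have "\<dots> = Kc * V n" unfolding Kc_def by (simp add: mult_ac)
    also have "\<dots> \<le> Kc * (exp (\<nu> * (T1 + S)) * exp (- \<nu> * t) * V 0)" using Vb Kcp by (intro mult_left_mono)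
    also have "\<dots> = Kc * V 0 * exp (\<nu> * (T1 + S)) * exp (- \<nu> * t)" by (simp add: mult_ac)
    also have "\<dots> \<le> M * exp (- \<nu> * t)" by (rule Mge2)
    finally have fin: "(1 + LX + \<tau>p) * W \<le> M * exp (- \<nu> * t)" .
    have Wpos: "Et \<ge> 0" "Zt \<ge> 0" "Qt \<ge> 0" unfolding Et_def Zt_def Qt_def by auto
    have "norm (x t - \<Xi> ur) \<le> Zt + norm (\<Xi> (uI t) - \<Xi> ur)" unfolding Zt_def
      by (metis add.commute diff_add_cancel norm_triangle_ineq order_refl diff_add_eq_diff_diff_swap norm_triangle_sub)
    also have "norm (\<Xi> (uI t) - \<Xi> ur) \<le> LX * Et" unfolding Et_def using LX(2) uI_range[OF t] ur_ab by auto
    finally have t1: "norm (x t - \<Xi> ur) \<le> Zt + LX * Et" by simp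
    have "\<bar>uu t - ur\<bar> \<le> Et + \<tau>p * k * Qt"
    proof -
      have h: "\<bar>\<tau>p * k * (r - g (x t))\<bar> = \<tau>p * k * \<bar>r - g (x t)\<bar>" using taup k0 by (simp add: abs_mult)
      have eq: "uu t - ur = (uI t - ur) + \<tau>p * k * (r - g (x t))" unfolding uu_def by simp
      have "\<bar>(uI t - ur) + \<tau>p * k * (r - g (x t))\<bar> \<le> \<bar>uI t - ur\<bar> + \<bar>\<tau>p * k * (r - g (x t))\<bar>"
        by (rule abs_triangle_ineq)
      then show ?thesis unfolding eq Et_def Qt_def h .
    qed
    also have "\<tau>p * k * Qt \<le> \<tau>p * 1 * Qt" using k0 k1 taup Wpos by (intro mult_mono) auto
    finally have t2: "\<bar>uu t - ur\<bar> \<le> Et + \<tau>p * Qt" by simp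
    have t3: "\<bar>g (x t) - r\<bar> = Qt" unfolding Qt_def by simp
    have "Zt + LX * Et \<le> (1 + LX + \<tau>p) * W" "Et + \<tau>p * Qt \<le> (1 + LX + \<tau>p) * W" "Qt \<le> (1 + LX + \<tau>p) * W"
      unfolding W_def using Wpos LX taup by (simp_all add: algebra_simps add_increasing mult_nonneg_nonneg)
    then show ?thesis using t1 t2 t3 fin by linarith
  qed
  show ?thesis using Mp \<nu> main by blast
qed

end

lemma exp_decay_lim: "(\<nu>::real) > 0 \<Longrightarrow> ((\<lambda>t::real. M * exp (-\<nu>*t)) \<longlongrightarrow> 0) at_top"
  apply (rule tendsto_mult_right_zero)
  apply (rule filterlim_compose[OF exp_at_bot])
  apply (rule filterlim_tendsto_neg_mult_at_bot[OF tendsto_const])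
  by (auto intro: filterlim_ident)

lemma lim_from_bound:
  fixes h :: "real \<Rightarrow> 'b::real_normed_vector"
  assumes "\<nu> > 0" "\<forall>t\<ge>0. norm (h t - c) \<le> M * exp (- \<nu> * t)"
  shows "(h \<longlongrightarrow> c) at_top"
proof (rule LIM_zero_cancel, rule Lim_null_comparison)
  show "\<forall>\<^sub>F t in at_top. norm (h t - c) \<le> M * exp (- \<nu> * t)"
    using eventually_ge_at_top[of "0::real"] by (rule eventually_mono) (use assms(2) in auto)
  show "((\<lambda>t. M * exp (- \<nu> * t)) \<longlongrightarrow> 0) at_top" by (rule exp_decay_lim[OF assms(1)])
qed

context traj begin

lemma concl: "let ur = u_ref g \<Xi> umin umax r; u = (\<lambda>t. uI t + \<tau>p * k * (r - g (x t))) in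
             (x \<longlongrightarrow> \<Xi> ur) at_top \<and> (u \<longlongrightarrow> ur) at_top \<and> ((\<lambda>t. g (x t)) \<longlongrightarrow> r) at_top \<and>
             (\<exists>M \<nu>. M > 0 \<and> \<nu> > 0 \<and> (\<forall>t\<ge>0.
                norm (x t - \<Xi> ur) \<le> M * exp (- \<nu> * t) \<and>
                \<bar>u t - ur\<bar> \<le> M * exp (- \<nu> * t) \<and>
                \<bar>g (x t) - r\<bar> \<le> M * exp (- \<nu> * t)))"
proof -
  have ueq: "(\<lambda>t. uI t + \<tau>p * k * (r - g (x t))) = uu" by (rule ext) (simp add: uu_def)
  obtain M \<nu> where M: "M > 0" "\<nu> > 0" and B: "\<forall>t\<ge>0. norm (x t - \<Xi> ur) \<le> M * exp (- \<nu> * t) \<and>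
     \<bar>uu t - ur\<bar> \<le> M * exp (- \<nu> * t) \<and> \<bar>g (x t) - r\<bar> \<le> M * exp (- \<nu> * t)"
    using expo by blast
  have l1: "(x \<longlongrightarrow> \<Xi> ur) at_top" by (rule lim_from_bound[OF M(2)]) (use B in auto)
  have l2: "(uu \<longlongrightarrow> ur) at_top" by (rule lim_from_bound[OF M(2)]) (use B in auto)
  have l3: "((\<lambda>t. g (x t)) \<longlongrightarrow> r) at_top" by (rule lim_from_bound[OF M(2)]) (use B in auto)
  show ?thesis unfolding Let_def ueq ur_def[symmetric] using l1 l2 l3 M B by blast
qed

end

lemma kbound: "0 \<le> P \<Longrightarrow> 0 < (k::real) \<Longrightarrow> k < Q / (P + 1) \<Longrightarrow> k * P < Q"
proof -
  assume P: "0 \<le> P" and k: "0 < k" and kb: "k < Q / (P + 1)"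
  have "k * P \<le> k * (P + 1)" using k by simp
  also have "k * (P + 1) < Q / (P + 1) * (P + 1)" using kb P by (intro mult_strict_right_mono) auto
  also have "\<dots> = Q" using P by simp
  finally show ?thesis .
qed

context cnst begin

lemma main_cnst: "\<exists>\<kappa>>0. \<forall>k r x uI. 0 < k \<and> k < \<kappa> \<and> r \<in> {g (\<Xi> umin) .. g (\<Xi> umax)} \<and>
           (x 0, uI 0) \<in> XT \<and> closed_loop_sol f g umin umax k \<tau>p r x uI \<longrightarrow>
           (let ur = u_ref g \<Xi> umin umax r; u = (\<lambda>t. uI t + \<tau>p * k * (r - g (x t))) in
             (x \<longlongrightarrow> \<Xi> ur) at_top \<and> (u \<longlongrightarrow> ur) at_top \<and> ((\<lambda>t. g (x t)) \<longlongrightarrow> r) at_top \<and>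
             (\<exists>M \<nu>. M > 0 \<and> \<nu> > 0 \<and> (\<forall>t\<ge>0.
                norm (x t - \<Xi> ur) \<le> M * exp (- \<nu> * t) \<and>
                \<bar>u t - ur\<bar> \<le> M * exp (- \<nu> * t) \<and>
                \<bar>g (x t) - r\<bar> \<le> M * exp (- \<nu> * t))))"
proof -
  define P2 where "P2 = \<tau>p * (2 * Gb)"
  define P4 where "P4 = c1 + LX * T1 * (2 * Gb)"
  define P5 where "P5 = Lf * (S + \<tau>p) * (2 * Gb) * S * exp (Lf * S)"
  define P8 where "P8 = 3 * S * cQ + \<mu> * S / 2"
  define P9 where "P9 = c5 * cQ * (b - a + \<epsilon>0)"
  define P10 where "P10 = CC + \<beta> * c5 * cQ + \<beta> * \<mu> * S / 4"
  define \<kappa> where "\<kappa> = min 1 (min (1 / (P2 + 1)) (min (1 / (c1 + 1)) (min ((3 * \<epsilon>0 / 4) / (P4 + 1))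
     (min (1 / (P5 + 1)) (min ((1/2) / (c4 + 1)) (min ((\<mu> * S / 2) / (c6 + 1)) (min (1 / (P8 + 1))
     (min ((3 * \<epsilon>0 / 4) / (P9 + 1)) ((3 * \<beta> / 4) / (P10 + 1))))))))))"
  have Ps: "0 \<le> P2" "0 \<le> P4" "0 \<le> P5" "0 \<le> P8" "0 \<le> P9" "0 \<le> P10"
    unfolding P2_def P4_def P5_def P8_def P9_def P10_def
    using taup Gb cnst_pos LX Lf S ab by (auto intro!: add_nonneg_nonneg mult_nonneg_nonneg)
  have cs: "0 \<le> c1" "0 \<le> c4" "0 \<le> c6" "0 < \<mu> * S / 2" "0 < 3 * \<epsilon>0 / 4" "0 < 3 * \<beta> / 4"
    using cnst_pos S by auto
  have mp: "\<And>a b. 0 < (a::real) \<Longrightarrow> 0 < b \<Longrightarrow> 0 < min a b" by simp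
  have qp: "\<And>P Q. 0 < (Q::real) \<Longrightarrow> 0 \<le> P \<Longrightarrow> 0 < Q / (P + 1)" by simp
  have \<kappa>p: "\<kappa> > 0" unfolding \<kappa>_def
    by (intro mp qp Ps cs zero_less_one) simp_all
  show ?thesis
  proof (intro exI[of _ \<kappa>] conjI \<kappa>p allI impI)
    fix k r x uI
    assume H: "0 < k \<and> k < \<kappa> \<and> r \<in> {g (\<Xi> umin) .. g (\<Xi> umax)} \<and>
           (x 0, uI 0) \<in> XT \<and> closed_loop_sol f g umin umax k \<tau>p r x uI"
    then have k0: "0 < k" and kk: "k < \<kappa>" by auto
    have kl: "k < 1" "k < 1 / (P2 + 1)" "k < 1 / (c1 + 1)" "k < (3 * \<epsilon>0 / 4) / (P4 + 1)"
      "k < 1 / (P5 + 1)" "k < (1/2) / (c4 + 1)" "k < (\<mu> * S / 2) / (c6 + 1)" "k < 1 / (P8 + 1)"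
      "k < (3 * \<epsilon>0 / 4) / (P9 + 1)" "k < (3 * \<beta> / 4) / (P10 + 1)"
      using kk unfolding \<kappa>_def min_less_iff_conj by blast+
    interpret tr: traj f g \<Xi> \<gamma> umin umax \<delta> \<epsilon>0 lam m \<mu> \<tau>p T XT a b LX XM S R0 Rs Lf Lg Gb k r x uI
    proof unfold_locales
      show "0 < k" by (rule k0)
      show "k \<le> 1" using kl by simp
      show "k * (\<tau>p * (2 * Gb)) \<le> 1" using kbound[OF Ps(1) k0 kl(2)] unfolding P2_def by simp
      show "k * c1 < 1" using kbound[OF cs(1) k0 kl(3)] .
      show "k * (c1 + LX * T1 * (2 * Gb)) \<le> 3 * \<epsilon>0 / 4" using kbound[OF Ps(2) k0 kl(4)] unfolding P4_def by simp
      show "k * (Lf * (S + \<tau>p) * (2 * Gb) * S * exp (Lf * S)) < 1" using kbound[OF Ps(3) k0 kl(5)] unfolding P5_def .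
      show "k * c4 \<le> 1/2" using kbound[OF cs(2) k0 kl(6)] by simp
      show "k * c6 \<le> \<mu> * S / 2" using kbound[OF cs(3) k0 kl(7)] by simp
      show "k * (3 * S * cQ + \<mu> * S / 2) \<le> 1" using kbound[OF Ps(4) k0 kl(8)] unfolding P8_def by simp
      show "k * (c5 * cQ * (b - a + \<epsilon>0)) \<le> 3 * \<epsilon>0 / 4" using kbound[OF Ps(5) k0 kl(9)] unfolding P9_def by simp
      show "k * (CC + \<beta> * c5 * cQ + \<beta> * \<mu> * S / 4) \<le> 3 * \<beta> / 4" using kbound[OF Ps(6) k0 kl(10)] unfolding P10_def by simp
      show "r \<in> {g (\<Xi> umin) .. g (\<Xi> umax)}" "(x 0, uI 0) \<in> XT" "closed_loop_sol f g umin umax k \<tau>p r x uI"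
        using H by auto
    qed
    show "let ur = u_ref g \<Xi> umin umax r; u = (\<lambda>t. uI t + \<tau>p * k * (r - g (x t))) in
             (x \<longlongrightarrow> \<Xi> ur) at_top \<and> (u \<longlongrightarrow> ur) at_top \<and> ((\<lambda>t. g (x t)) \<longlongrightarrow> r) at_top \<and>
             (\<exists>M \<nu>. M > 0 \<and> \<nu> > 0 \<and> (\<forall>t\<ge>0.
                norm (x t - \<Xi> ur) \<le> M * exp (- \<nu> * t) \<and>
                \<bar>u t - ur\<bar> \<le> M * exp (- \<nu> * t) \<and>
                \<bar>g (x t) - r\<bar> \<le> M * exp (- \<nu> * t)))"
      by (rule tr.concl)
  qed
qed

end

theorem lemma2:
  fixes f :: "'a::euclidean_space \<Rightarrow> real \<Rightarrow> 'a" and g :: "'a \<Rightarrow> real"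
    and \<Xi> :: "real \<Rightarrow> 'a" and \<gamma> :: "real \<Rightarrow> real"
    and umin umax \<delta> \<epsilon>0 lam m \<mu> \<tau>p T :: real
    and XT :: "('a \<times> real) set"
  assumes "umin < umax"
    and "C2_map (\<lambda>p. f (fst p) (snd p))"
    and "loc_lipschitz g"
    and "A2 f g \<Xi> umin umax \<delta> \<epsilon>0 lam m \<mu>"
    and "A3 f \<Xi> umin umax \<delta> \<gamma>"
    and "\<tau>p \<ge> 0"
    and "bounded (range g) \<or> \<tau>p = 0"
    and "T > 0"
    and "compact XT"
    and "XT \<subseteq> UNIV \<times> Udelta umin umax \<delta>"
    and "\<forall>(x0, u0)\<in>XT. (\<exists>x. x 0 = x0 \<and> plant_sol f (\<lambda>_. u0) {0..T} x) \<and>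
           (\<forall>x. x 0 = x0 \<and> plant_sol f (\<lambda>_. u0) {0..T} x \<longrightarrow> norm (x T - \<Xi> u0) \<le> \<epsilon>0)"
  shows "\<exists>\<kappa>>0. \<forall>k r x uI. 0 < k \<and> k < \<kappa> \<and> r \<in> {g (\<Xi> umin) .. g (\<Xi> umax)} \<and>
           (x 0, uI 0) \<in> XT \<and> closed_loop_sol f g umin umax k \<tau>p r x uI \<longrightarrow>
           (let ur = u_ref g \<Xi> umin umax r; u = (\<lambda>t. uI t + \<tau>p * k * (r - g (x t))) in
             (x \<longlongrightarrow> \<Xi> ur) at_top \<and> (u \<longlongrightarrow> ur) at_top \<and> ((\<lambda>t. g (x t)) \<longlongrightarrow> r) at_top \<and>
             (\<exists>M \<nu>. M > 0 \<and> \<nu> > 0 \<and> (\<forall>t\<ge>0.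
                norm (x t - \<Xi> ur) \<le> M * exp (- \<nu> * t) \<and>
                \<bar>u t - ur\<bar> \<le> M * exp (- \<nu> * t) \<and>
                \<bar>g (x t) - r\<bar> \<le> M * exp (- \<nu> * t))))"
proof -
  interpret ps: plant_setting f g \<Xi> \<gamma> umin umax \<delta> \<epsilon>0 lam m \<mu> \<tau>p T XT "umin - \<delta>" "umax + \<delta>"
    by unfold_locales (use assms in auto)
  define a where "a = umin - \<delta>"
  define b where "b = umax + \<delta>"
  obtain LX where LX: "LX > 0" "\<forall>u\<in>{a..b}. \<forall>v\<in>{a..b}. norm (\<Xi> u - \<Xi> v) \<le> LX * \<bar>u - v\<bar>"
    using Xi_lip[OF ps.basic(2)] unfolding a_def b_def by blast
  have "compact (\<Xi> ` {a..b})"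
    by (intro compact_continuous_image C1_on_cont) (use ps.basic(2) in \<open>auto simp: a_def b_def\<close>)
  then obtain B where B: "\<And>u. u \<in> {a..b} \<Longrightarrow> norm (\<Xi> u) \<le> B"
    using compact_imp_bounded[of "\<Xi> ` {a..b}"] unfolding bounded_iff by (metis imageI)
  define XM where "XM = max B 0"
  have XM: "XM \<ge> 0" "\<forall>u\<in>{a..b}. norm (\<Xi> u) \<le> XM" using B unfolding XM_def by force+
  define S where "S = ln (4 * m) / lam"
  have m1: "m \<ge> 1" "lam > 0" using ps.basic by auto
  have S: "S > 0" "m * exp (- lam * S) \<le> 1/4"
  proof -
    show "S > 0" unfolding S_def using m1 by (intro divide_pos_pos) auto
    have "- lam * S = - ln (4 * m)" unfolding S_def using m1 by simp
    then have "exp (- lam * S) = 1 / (4 * m)" using m1 by (simp add: exp_minus inverse_eq_divide)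
    then show "m * exp (- lam * S) \<le> 1/4" using m1 by simp
  qed
  obtain R0 where R0: "R0 \<ge> 0" "\<forall>p\<in>XT. \<forall>\<phi>. \<phi> 0 = fst p \<and> plant_sol f (\<lambda>_. snd p) {0..T} \<phi> \<longrightarrow> (\<forall>t\<in>{0..T}. norm (\<phi> t) \<le> R0)"
    using ps.frozen_bound by blast
  define Rs where "Rs = R0 + XM + m * \<epsilon>0 + 1"
  obtain Lf where Lf: "Lf > 0" "\<forall>p q w1 w2. norm p \<le> Rs \<longrightarrow> norm q \<le> Rs \<longrightarrow> w1 \<in> {a-1..b+1} \<longrightarrow> w2 \<in> {a-1..b+1} \<longrightarrow>
        norm (f p w1 - f q w2) \<le> Lf * (norm (p - q) + \<bar>w1 - w2\<bar>)"
    using f_lip[OF assms(2), of Rs "a-1" "b+1"] by blast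
  obtain Lg where Lg: "Lg > 0" "Lg-lipschitz_on (cball 0 Rs) g" using g_lip[OF assms(3)] by blast
  have Rs0: "Rs \<ge> 0" unfolding Rs_def using R0 XM ps.basic by simp
  define Gb where "Gb = \<bar>g 0\<bar> + Lg * Rs"
  have Gb: "Gb \<ge> 0" "\<forall>p\<in>cball 0 Rs. \<bar>g p\<bar> \<le> Gb"
  proof -
    show "Gb \<ge> 0" unfolding Gb_def using Lg Rs0 by simp
    show "\<forall>p\<in>cball 0 Rs. \<bar>g p\<bar> \<le> Gb"
    proof
      fix p assume p: "p \<in> cball (0::'a) Rs"
      have z: "(0::'a) \<in> cball 0 Rs" using Rs0 by simp
      have "dist (g p) (g 0) \<le> Lg * dist p 0" by (rule lipschitz_onD[OF Lg(2) p z])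
      also have "\<dots> \<le> Lg * Rs" using p Lg by (intro mult_left_mono) (auto simp: dist_norm)
      finally show "\<bar>g p\<bar> \<le> Gb" unfolding Gb_def dist_real_def by linarith
    qed
  qed
  interpret cn: cnst f g \<Xi> \<gamma> umin umax \<delta> \<epsilon>0 lam m \<mu> \<tau>p T XT a b LX XM S R0 Rs Lf Lg Gb
    unfolding a_def b_def
    by unfold_locales (use LX XM S R0 Lf Lg Gb assms in \<open>auto simp: a_def b_def Rs_def\<close>)
  show ?thesis by (rule cn.main_cnst)
qed

end
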